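(* Let $t_0\ge 0$, $m\ge 1$, and consider the scalar delay differential equation $$\dot{y}(t)=c(t)y(t)-\sum_{k=1}^m d_k(t)\,y(h_k(t)),\qquad t\ge t_0,$$ where $c,d_1,\dots,d_m:[0,\infty)\to\mathbb{R}$ are Lebesgue measurable and essentially bounded, and $h_1,\dots,h_m$ are Lebesgue measurable on $[0,\infty)$ with constants $0\le\delta_k\le\tau_k<\infty$ such that $\delta_k\le t-h_k(t)\le\tau_k$ for $t\ge t_0$, $k=1,\dots,m$. Put $d(t)=\sum_{k=1}^m d_k(t)$. Suppose there is $\alpha_0>0$ such that $d(t)-c(t)\ge\alpha_0$ for (almost every) $t\ge t_0$ and $$K_0:=\Big(\|c\|_{[t_0,\infty)}+\sum_{k=1}^m\|d_k\|_{[t_0,\infty)}\Big)\sum_{k=1}^m\tau_k\Big\|\frac{d_k}{d-c}\Big\|_{[t_0,\infty)}<1.$$ Then this equation is uniformly exponentially stable, and its fundamental function $Y(t,s)$ satisfies $|Y(t,s)|\le (1-K_0)^{-1}$ for all $t\ge s\ge t_0$.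
   Context: For an interval $J$, $\|f\|_J=\operatorname{ess\,sup}_{t\in J}|f(t)|$. The fundamental function $Y(t,s)$ is, for each fixed $s$, the (locally absolutely continuous, satisfying the equation a.e.) solution of $\frac{\partial Y(t,s)}{\partial t}=c(t)Y(t,s)-\sum_k d_k(t)Y(h_k(t),s)$ for $t\ge s$, with $Y(t,s)=0$ for $t<s$ and $Y(s,s)=1$. Let $\tau=\max_k\tau_k$. The equation is called uniformly exponentially stable if there are $M>0,\gamma>0$, independent of the initial point $t_0$ and of the initial function $\phi$, such that every solution of the equation with initial condition $y(t)=\phi(t)$, $t\le t_0$ ($\phi$ bounded, Borel measurable on $[t_0-\tau,t_0]$), satisfies $|y(t)|\le Me^{-\gamma(t-t_0)}\sup_{t\in[t_0-\tau,t_0]}|\phi(t)|$ for $t\ge t_0$. A solution is a locally absolutely continuous function on $[t_0,\infty)$ satisfying the equation almost everywhere and the initial condition for $t\le t_0$. *)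

theory Defs
  imports "HOL-Analysis.Analysis" "HOL-Probability.Essential_Supremum"
begin

definition abs_cont_on :: "real \<Rightarrow> real \<Rightarrow> (real \<Rightarrow> real) \<Rightarrow> bool" where
  "abs_cont_on a b f \<longleftrightarrow>
     (\<forall>\<epsilon>>0. \<exists>\<delta>>0. \<forall>(n::nat) (u::nat \<Rightarrow> real) (v::nat \<Rightarrow> real).
        (\<forall>i<n. a \<le> u i \<and> u i \<le> v i \<and> v i \<le> b) \<and>
        (\<forall>i<n. \<forall>j<n. i \<noteq> j \<longrightarrow> v i \<le> u j \<or> v j \<le> u i) \<and>
        (\<Sum>i<n. v i - u i) < \<delta>
        \<longrightarrow> (\<Sum>i<n. \<bar>f (v i) - f (u i)\<bar>) < \<epsilon>)"

definition loc_abs_cont_from :: "real \<Rightarrow> (real \<Rightarrow> real) \<Rightarrow> bool" where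
  "loc_abs_cont_from a f \<longleftrightarrow> (\<forall>b\<ge>a. abs_cont_on a b f)"

definition ess_sup_abs :: "real set \<Rightarrow> (real \<Rightarrow> real) \<Rightarrow> ereal" where
  "ess_sup_abs J f = esssup (restrict_space lebesgue J) (\<lambda>t. ereal \<bar>f t\<bar>)"

definition ess_bounded_on :: "real set \<Rightarrow> (real \<Rightarrow> real) \<Rightarrow> bool" where
  "ess_bounded_on J f \<longleftrightarrow> ess_sup_abs J f < \<infinity>"

definition ess_norm :: "real set \<Rightarrow> (real \<Rightarrow> real) \<Rightarrow> real" where
  "ess_norm J f = real_of_ereal (ess_sup_abs J f)"

text \<open>Solution of  y'(t) = c t * y t - sum_{k<m} d k t * y (h k t),  t \<ge> t1,
  with initial condition y t = phi t for t \<le> t1 (indices k = 0..m-1).\<close>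
definition is_solution ::
  "(real \<Rightarrow> real) \<Rightarrow> (nat \<Rightarrow> real \<Rightarrow> real) \<Rightarrow> (nat \<Rightarrow> real \<Rightarrow> real) \<Rightarrow> nat \<Rightarrow>
   real \<Rightarrow> (real \<Rightarrow> real) \<Rightarrow> (real \<Rightarrow> real) \<Rightarrow> bool" where
  "is_solution c d h m t1 \<phi> y \<longleftrightarrow>
     loc_abs_cont_from t1 y \<and>
     (AE t in lebesgue. t \<ge> t1 \<longrightarrow>
        (y has_real_derivative (c t * y t - (\<Sum>k<m. d k t * y (h k t)))) (at t)) \<and>
     (\<forall>t\<le>t1. y t = \<phi> t)"

definition is_fundamental_function ::
  "(real \<Rightarrow> real) \<Rightarrow> (nat \<Rightarrow> real \<Rightarrow> real) \<Rightarrow> (nat \<Rightarrow> real \<Rightarrow> real) \<Rightarrow> nat \<Rightarrow>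
   real \<Rightarrow> (real \<Rightarrow> real \<Rightarrow> real) \<Rightarrow> bool" where
  "is_fundamental_function c d h m t0 Y \<longleftrightarrow>
     (\<forall>s\<ge>t0. is_solution c d h m s (\<lambda>t. if t = s then 1 else 0) (\<lambda>t. Y t s))"

text \<open>Uniform exponential stability (initial points t1 \<ge> t0, tau = max delay).\<close>
definition unif_exp_stable ::
  "(real \<Rightarrow> real) \<Rightarrow> (nat \<Rightarrow> real \<Rightarrow> real) \<Rightarrow> (nat \<Rightarrow> real \<Rightarrow> real) \<Rightarrow> nat \<Rightarrow>
   real \<Rightarrow> real \<Rightarrow> bool" where
  "unif_exp_stable c d h m t0 \<tau> \<longleftrightarrow>
     (\<exists>M>0. \<exists>\<gamma>>0. \<forall>t1\<ge>t0. \<forall>\<phi> y.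
        bounded (\<phi> ` {t1 - \<tau>..t1}) \<and> set_borel_measurable borel {t1 - \<tau>..t1} \<phi> \<and>
        is_solution c d h m t1 \<phi> y
        \<longrightarrow> (\<forall>t\<ge>t1. \<bar>y t\<bar> \<le> M * exp (- \<gamma> * (t - t1)) * (SUP s\<in>{t1 - \<tau>..t1}. \<bar>\<phi> s\<bar>)))"

end

theory Submission
  imports Defs
begin


lemma deriv_local_bound:
  fixes F :: "real \<Rightarrow> real"
  assumes "(F has_real_derivative D) (at t)" "e > 0"
  obtains r where "r > 0" "\<And>x. \<bar>x - t\<bar> < r \<Longrightarrow> \<bar>F x - F t - D * (x - t)\<bar> \<le> e * \<bar>x - t\<bar>"
proof -
  from assms(1) have "((\<lambda>y. (F y - F t) / (y - t)) \<longlongrightarrow> D) (at t)"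
    by (simp add: has_field_derivative_iff)
  then have "\<forall>\<^sub>F y in at t. dist ((F y - F t) / (y - t)) D < e" using assms(2) by (rule tendstoD)
  then obtain r where r: "r > 0" "\<And>y. y \<noteq> t \<Longrightarrow> dist y t < r \<Longrightarrow> dist ((F y - F t) / (y - t)) D < e"
    by (auto simp: eventually_at)
  show ?thesis
  proof (rule that[OF r(1)])
    fix x assume x: "\<bar>x - t\<bar> < r"
    show "\<bar>F x - F t - D * (x - t)\<bar> \<le> e * \<bar>x - t\<bar>"
    proof (cases "x = t")
      case True then show ?thesis by simp
    next
      case False
      then have "\<bar>(F x - F t) / (x - t) - D\<bar> < e" using r(2)[of x] x by (simp add: dist_real_def)
      then have "\<bar>(F x - F t) / (x - t) - D\<bar> * \<bar>x - t\<bar> \<le> e * \<bar>x - t\<bar>" by (simp add: mult_right_mono)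
      moreover have "\<bar>(F x - F t) / (x - t) - D\<bar> * \<bar>x - t\<bar> = \<bar>F x - F t - D * (x - t)\<bar>"
        using False by (simp add: abs_mult[symmetric] field_simps)
      ultimately show ?thesis by simp
    qed
  qed
qed

lemma straddle_nonpos:
  fixes F :: "real \<Rightarrow> real"
  assumes "(F has_real_derivative D) (at t)" "D \<le> 0" "e > 0"
  obtains r where "r > 0" "\<And>x y. x \<le> t \<Longrightarrow> t \<le> y \<Longrightarrow> \<bar>x - t\<bar> < r \<Longrightarrow> \<bar>y - t\<bar> < r \<Longrightarrow> F y - F x \<le> e * (y - x)"
proof -
  obtain r where r: "r > 0" "\<And>x. \<bar>x - t\<bar> < r \<Longrightarrow> \<bar>F x - F t - D * (x - t)\<bar> \<le> e * \<bar>x - t\<bar>"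
    using deriv_local_bound[OF assms(1,3)] by blast
  show ?thesis
  proof (rule that[OF r(1)])
    fix x y assume xy: "x \<le> t" "t \<le> y" "\<bar>x - t\<bar> < r" "\<bar>y - t\<bar> < r"
    have 1: "F y - F t \<le> D * (y - t) + e * (y - t)" using r(2)[OF xy(4)] xy by (simp add: abs_if split: if_splits)
    have 2: "F t - F x \<le> - D * (x - t) + e * (t - x)" using r(2)[OF xy(3)] xy by (simp add: abs_if split: if_splits)
    have "D * (y - t) \<le> 0" using assms(2) xy by (simp add: mult_nonpos_nonneg)
    moreover have "- D * (x - t) \<le> 0" using assms(2) xy by (simp add: mult_nonpos_nonpos)
    ultimately show "F y - F x \<le> e * (y - x)" using 1 2 by (simp add: algebra_simps)
  qed
qed

lemma tdiv_interval:
  fixes a b :: real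
  assumes "p tagged_division_of {a..b}" "(x,K) \<in> p"
  shows "\<exists>l r. K = {l..r} \<and> a \<le> l \<and> l \<le> x \<and> x \<le> r \<and> r \<le> b"
proof -
  obtain l r where K: "K = cbox l r" using tagged_division_ofD(4)[OF assms] by blast
  have "x \<in> K" "K \<subseteq> {a..b}" using tagged_division_ofD(2,3)[OF assms] by auto
  then show ?thesis using K by (intro exI[of _ l] exI[of _ r]) auto
qed

lemma nonoverlap_real:
  fixes l1 r1 l2 r2 :: real
  assumes "l1 < r1" "l2 < r2" "{l1<..<r1} \<inter> {l2<..<r2} = {}"
  shows "r1 \<le> l2 \<or> r2 \<le> l1"
proof (rule ccontr)
  assume "\<not> ?thesis"
  then have "l2 < r1" "l1 < r2" by auto
  define z where "z = (max l1 l2 + min r1 r2) / 2"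
  have "z \<in> {l1<..<r1} \<inter> {l2<..<r2}" using assms(1,2) \<open>l2 < r1\<close> \<open>l1 < r2\<close>
    unfolding z_def by (auto simp: max_def min_def)
  then show False using assms(3) by blast
qed

lemma ac_mono:
  fixes F :: "real \<Rightarrow> real"
  assumes ab: "a \<le> b" and ac: "abs_cont_on a b F"
    and der: "AE t in lebesgue. t \<in> {a..b} \<longrightarrow> (\<exists>D. (F has_real_derivative D) (at t) \<and> D \<le> 0)"
  shows "F b \<le> F a"
proof -
  from der obtain N where N: "{x \<in> space lebesgue. \<not> (x \<in> {a..b} \<longrightarrow> (\<exists>D. (F has_real_derivative D) (at x) \<and> D \<le> 0))} \<subseteq> N"
    "emeasure lebesgue N = 0" "N \<in> sets lebesgue"
    by (rule AE_E)
  have negN: "negligible N" using N(2,3) by (simp add: negligible_iff_null_sets null_sets_def)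
  have good: "\<exists>D. (F has_real_derivative D) (at t) \<and> D \<le> 0" if "t \<in> {a..b}" "t \<notin> N" for t
    using N(1) that by auto
  have key: "F b - F a \<le> e + e * (b - a)" if e: "e > 0" for e
  proof -
    obtain \<delta> where \<delta>: "\<delta> > 0" and ac\<delta>: "\<forall>(n::nat) (u::nat \<Rightarrow> real) (v::nat \<Rightarrow> real). (\<forall>i<n. a \<le> u i \<and> u i \<le> v i \<and> v i \<le> b) \<and>
         (\<forall>i<n. \<forall>j<n. i \<noteq> j \<longrightarrow> v i \<le> u j \<or> v j \<le> u i) \<and>
         (\<Sum>i<n. v i - u i) < \<delta> \<longrightarrow> (\<Sum>i<n. \<bar>F (v i) - F (u i)\<bar>) < e"
      using ac e unfolding abs_cont_on_def by blast
    have "(indicat_real N has_integral 0) (cbox a b)" using negN by (simp add: negligible)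
    then obtain \<gamma>1 where \<gamma>1: "gauge \<gamma>1" "\<And>\<D>. \<D> tagged_division_of cbox a b \<Longrightarrow> \<gamma>1 fine \<D> \<Longrightarrow>
        norm ((\<Sum>(x,k)\<in>\<D>. Henstock_Kurzweil_Integration.content k *\<^sub>R indicat_real N x) - 0) < \<delta>"
      using \<delta> unfolding has_integral by meson
    define P where "P t r \<longleftrightarrow> r > 0 \<and> (\<forall>x y. x \<le> t \<and> t \<le> y \<and> \<bar>x - t\<bar> < r \<and> \<bar>y - t\<bar> < r \<longrightarrow> F y - F x \<le> e * (y - x))" for t r
    define R where "R t = (if t \<in> {a..b} \<and> t \<notin> N then (SOME r. P t r) else 1)" for t
    have R: "R t > 0 \<and> (t \<in> {a..b} \<and> t \<notin> N \<longrightarrow> P t (R t))" for t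
    proof (cases "t \<in> {a..b} \<and> t \<notin> N")
      case True
      then obtain D where D: "(F has_real_derivative D) (at t)" "D \<le> 0" using good by blast
      obtain r where "r > 0" "\<And>x y. x \<le> t \<Longrightarrow> t \<le> y \<Longrightarrow> \<bar>x - t\<bar> < r \<Longrightarrow> \<bar>y - t\<bar> < r \<Longrightarrow> F y - F x \<le> e * (y - x)"
        using straddle_nonpos[OF D e] by blast
      then have "P t r" unfolding P_def by blast
      then have "P t (R t)" using True unfolding R_def by (simp add: someI)
      then show ?thesis using True unfolding P_def by auto
    next
      case False then show ?thesis unfolding R_def using False by auto
    qed
    define \<gamma> where "\<gamma> t = \<gamma>1 t \<inter> ball t (R t)" for t
    have "gauge (\<lambda>t. ball t (R t))" using R by (intro gauge_ball_dependent) auto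
    then have g: "gauge \<gamma>" unfolding \<gamma>_def using \<gamma>1(1) by (intro gauge_Int) auto
    obtain p where p: "p tagged_division_of cbox a b" "\<gamma> fine p" using fine_division_exists[OF g] by blast
    have p1fine: "\<gamma>1 fine p" and p2fine: "(\<lambda>t. ball t (R t)) fine p" using p(2) unfolding \<gamma>_def fine_Int by auto
    have pd: "p tagged_division_of {a..b}" using p(1) by simp
    have fin: "finite p" using pd by blast
    define g where "g = (\<lambda>(x::real, K::real set). F (Sup K) - F (Inf K))"
    define cK where "cK = (\<lambda>(x::real, K::real set). Henstock_Kurzweil_Integration.content K)"
    have sumF: "sum g p = F b - F a" unfolding g_def using additive_tagged_division_1[OF ab pd] by simp
    have sumc: "sum cK p = b - a" unfolding cK_def using additive_content_tagged_division[OF p(1)] ab by simp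
    define p1 where "p1 = {xK \<in> p. fst xK \<in> N}"
    define p2 where "p2 = {xK \<in> p. fst xK \<notin> N}"
    have pu: "p = p1 \<union> p2" "p1 \<inter> p2 = {}" unfolding p1_def p2_def by auto
    have fin1: "finite p1" "finite p2" using fin unfolding p1_def p2_def by auto
    have split: "sum g p = sum g p1 + sum g p2" "sum cK p = sum cK p1 + sum cK p2"
      using sum.union_disjoint[OF fin1 pu(2)] pu(1) by auto
    have iv: "\<exists>l r. K = {l..r} \<and> a \<le> l \<and> l \<le> x \<and> x \<le> r \<and> r \<le> b" if "(x,K) \<in> p" for x K
      using tdiv_interval[OF pd that] .
    have gK: "g (x, {l..r}) = F r - F l" "cK (x, {l..r}) = r - l" if "l \<le> r" for x l r
      using that unfolding g_def cK_def by auto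
    have cKnn: "cK xK \<ge> 0" if "xK \<in> p" for xK
      using iv[of "fst xK" "snd xK"] that gK by (cases xK) auto
    have b2: "g xK \<le> e * cK xK" if "xK \<in> p2" for xK
    proof -
      obtain x K where xK: "xK = (x, K)" by (cases xK)
      have inp: "(x,K) \<in> p" and xN: "x \<notin> N" using that xK unfolding p2_def by auto
      obtain l r where K: "K = {l..r}" "a \<le> l" "l \<le> x" "x \<le> r" "r \<le> b" using iv[OF inp] by blast
      have "K \<subseteq> ball x (R x)" using p2fine inp unfolding fine_def by blast
      moreover have "l \<in> K" "r \<in> K" using K by auto
      ultimately have "l \<in> ball x (R x)" "r \<in> ball x (R x)" by auto
      then have "\<bar>l - x\<bar> < R x" "\<bar>r - x\<bar> < R x" by (auto simp: dist_real_def abs_minus_commute)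
      moreover have "P x (R x)" using R[of x] K xN by auto
      ultimately have "F r - F l \<le> e * (r - l)" using K unfolding P_def by auto
      then show ?thesis using xK K gK[of l r x] by simp
    qed
    have s2: "sum g p2 \<le> e * (b - a)"
    proof -
      have "sum g p2 \<le> sum (\<lambda>xK. e * cK xK) p2" using b2 by (rule sum_mono)
      also have "\<dots> = e * sum cK p2" by (simp add: sum_distrib_left)
      also have "sum cK p2 \<le> b - a" using split(2) sumc cKnn pu(1)
        by (smt (verit, ccfv_SIG) Un_iff sum_nonneg)
      finally show ?thesis using e by (simp add: mult_left_mono)
    qed
    have c1: "sum cK p1 < \<delta>"
    proof -
      have "(\<Sum>(x,k)\<in>p. Henstock_Kurzweil_Integration.content k *\<^sub>R indicat_real N x) = sum cK p1"
      proof -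
        have "(\<Sum>(x,k)\<in>p. Henstock_Kurzweil_Integration.content k *\<^sub>R indicat_real N x)
            = (\<Sum>xK\<in>p. (if fst xK \<in> N then cK xK else 0))"
          unfolding cK_def by (intro sum.cong) (auto simp: indicator_def)
        also have "\<dots> = sum cK p1" unfolding p1_def using fin by (simp add: sum.inter_filter)
        finally show ?thesis .
      qed
      then show ?thesis using \<gamma>1(2)[OF p(1) p1fine] by simp
    qed
    define q where "q = {xK \<in> p1. cK xK > 0}"
    have finq: "finite q" using fin1 unfolding q_def by auto
    have gq: "sum g p1 = sum g q" and cq: "sum cK p1 = sum cK q"
    proof -
      have z: "g xK = 0 \<and> cK xK = 0" if "xK \<in> p1" "xK \<notin> q" for xK
      proof -
        obtain x K where xK: "xK = (x, K)" by (cases xK)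
        have inp: "(x,K) \<in> p" using that xK unfolding p1_def by auto
        obtain l r where K: "K = {l..r}" "l \<le> r" using iv[OF inp] by force
        have "cK xK \<le> 0" using that unfolding q_def by auto
        then have "l = r" using K xK gK[of l r x] by simp
        then show ?thesis using K xK gK[of l r x] by simp
      qed
      have sub: "q \<subseteq> p1" unfolding q_def by auto
      show "sum g p1 = sum g q" using z by (intro sum.mono_neutral_right[OF fin1(1) sub]) auto
      show "sum cK p1 = sum cK q" using z by (intro sum.mono_neutral_right[OF fin1(1) sub]) auto
    qed
    obtain h where h: "bij_betw h {0..<card q} q" using ex_bij_betw_nat_finite[OF finq] by blast
    define n where "n = card q"
    define u where "u i = Inf (snd (h i))" for i
    define v where "v i = Sup (snd (h i))" for i
    have hq: "h i \<in> q" if "i < n" for i using h that unfolding n_def bij_betw_def by auto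
    have iq: "\<exists>x l r. h i = (x, {l..r}) \<and> a \<le> l \<and> l < r \<and> r \<le> b \<and> u i = l \<and> v i = r" if "i < n" for i
    proof -
      obtain x K where xK: "h i = (x, K)" by (cases "h i")
      have inp: "(x,K) \<in> p" and pos: "cK (x,K) > 0" using hq[OF that] xK unfolding q_def p1_def by auto
      obtain l r where K: "K = {l..r}" "a \<le> l" "l \<le> r" "r \<le> b" using iv[OF inp] by force
      have "l < r" using pos K gK[of l r x] by simp
      then show ?thesis using K xK unfolding u_def v_def by auto
    qed
    have H1: "\<forall>i<n. a \<le> u i \<and> u i \<le> v i \<and> v i \<le> b" using iq by force
    have H2: "\<forall>i<n. \<forall>j<n. i \<noteq> j \<longrightarrow> v i \<le> u j \<or> v j \<le> u i"
    proof (intro allI impI)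
      fix i j assume ij: "i < n" "j < n" "i \<noteq> j"
      obtain x l r where I: "h i = (x, {l..r})" "l < r" "u i = l" "v i = r" using iq[OF ij(1)] by blast
      obtain x' l' r' where J: "h j = (x', {l'..r'})" "l' < r'" "u j = l'" "v j = r'" using iq[OF ij(2)] by blast
      have "h i \<noteq> h j" using h ij unfolding bij_betw_def inj_on_def n_def by auto
      moreover have "h i \<in> p" "h j \<in> p" using hq ij unfolding q_def p1_def by auto
      ultimately have "interior {l..r} \<inter> interior {l'..r'} = {}"
        using tagged_division_ofD(5)[OF pd, of x "{l..r}" x' "{l'..r'}"] I J by auto
      then have "{l<..<r} \<inter> {l'<..<r'} = {}" by simp
      from nonoverlap_real[OF I(2) J(2) this] show "v i \<le> u j \<or> v j \<le> u i" using I J by auto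
    qed
    have reidx: "(\<Sum>i<n. f (h i)) = sum f q" for f :: "real \<times> real set \<Rightarrow> real"
      using sum.reindex_bij_betw[OF h, of f] unfolding n_def by (simp add: lessThan_atLeast0)
    have "(\<Sum>i<n. v i - u i) = (\<Sum>i<n. cK (h i))"
      using iq gK by (intro sum.cong) force+
    also have "\<dots> = sum cK q" by (rule reidx)
    finally have H3: "(\<Sum>i<n. v i - u i) < \<delta>" using c1 cq by simp
    have s1: "(\<Sum>i<n. \<bar>F (v i) - F (u i)\<bar>) < e" using ac\<delta> H1 H2 H3 by blast
    have "sum g p1 = (\<Sum>i<n. g (h i))" using gq reidx by simp
    also have "\<dots> = (\<Sum>i<n. F (v i) - F (u i))" using iq gK by (intro sum.cong) force+
    also have "\<dots> \<le> (\<Sum>i<n. \<bar>F (v i) - F (u i)\<bar>)" by (intro sum_mono) simp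
    finally have "sum g p1 < e" using s1 by simp
    then show ?thesis using sumF split(1) s2 by simp
  qed
  show ?thesis
  proof (rule ccontr)
    assume "\<not> ?thesis"
    then have pos: "F b - F a > 0" by simp
    define e where "e = (F b - F a) / (2 * (1 + (b - a)))"
    have e: "e > 0" using pos ab unfolding e_def by simp
    have w: "1 + (b - a) > 0" using ab by simp
    have "e + e * (b - a) = e * (1 + (b - a))" by (simp add: algebra_simps)
    also have "\<dots> = (F b - F a) / 2" unfolding e_def using w
      by (metis (no_types, lifting) divide_divide_eq_left nonzero_mult_div_cancel_right order_less_irrefl times_divide_eq_left)
    finally have "e + e * (b - a) = (F b - F a) / 2" .
    then show False using key[OF e] pos by simp
  qed
qed




lemma meas_restr:
  fixes f :: "real \<Rightarrow> real"
  assumes "set_borel_measurable lebesgue {0..} f" "t0 \<ge> 0"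
  shows "f \<in> borel_measurable (restrict_space lebesgue {t0..})"
proof -
  have "f \<in> borel_measurable (restrict_space lebesgue {0..})"
    using assms(1) unfolding set_borel_measurable_def
    by (subst borel_measurable_restrict_space_iff) auto
  then show ?thesis by (rule measurable_restrict_mono) (use assms(2) in auto)
qed

lemma ereal_le_real: "ereal x \<le> E \<Longrightarrow> E \<noteq> \<infinity> \<Longrightarrow> x \<le> real_of_ereal E"
  by (cases E) auto

lemma ess_AE:
  fixes f :: "real \<Rightarrow> real"
  assumes "ess_sup_abs {t0..} f \<noteq> \<infinity>"
  shows "AE t in lebesgue. t \<ge> t0 \<longrightarrow> \<bar>f t\<bar> \<le> ess_norm {t0..} f"
proof -
  have "AE t in restrict_space lebesgue {t0..}. ereal \<bar>f t\<bar> \<le> ess_sup_abs {t0..} f"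
    unfolding ess_sup_abs_def by (rule esssup_AE)
  then have "AE t in lebesgue. t \<in> {t0..} \<longrightarrow> ereal \<bar>f t\<bar> \<le> ess_sup_abs {t0..} f"
    by (subst (asm) AE_restrict_space_iff) auto
  then show ?thesis
    by eventually_elim (auto simp: ess_norm_def intro: ereal_le_real[OF _ assms])
qed

lemma ess_fin_from_AE:
  fixes f :: "real \<Rightarrow> real"
  assumes "f \<in> borel_measurable (restrict_space lebesgue {t0..})"
    "AE t in lebesgue. t \<ge> t0 \<longrightarrow> \<bar>f t\<bar> \<le> B"
  shows "ess_sup_abs {t0..} f \<noteq> \<infinity>"
proof -
  have m: "(\<lambda>t. ereal \<bar>f t\<bar>) \<in> borel_measurable (restrict_space lebesgue {t0..})"
    using assms(1) by measurable
  have "AE t in restrict_space lebesgue {t0..}. ereal \<bar>f t\<bar> \<le> ereal B"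
    using assms(2) by (subst AE_restrict_space_iff) (auto elim!: AE_mp intro!: AE_I2)
  then have "ess_sup_abs {t0..} f \<le> ereal B"
    unfolding ess_sup_abs_def by (rule esssup_I[OF m])
  then show ?thesis by auto
qed

lemma ess_fin_mono:
  fixes f :: "real \<Rightarrow> real"
  assumes "set_borel_measurable lebesgue {0..} f" "ess_bounded_on {0..} f" "t0 \<ge> 0"
  shows "ess_sup_abs {t0..} f \<noteq> \<infinity>"
proof -
  have m: "(\<lambda>t. ereal \<bar>f t\<bar>) \<in> borel_measurable (restrict_space lebesgue {t0..})"
    using meas_restr[OF assms(1,3)] by measurable
  have "AE t in restrict_space lebesgue {0..}. ereal \<bar>f t\<bar> \<le> ess_sup_abs {0..} f"
    unfolding ess_sup_abs_def by (rule esssup_AE)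
  then have "AE t in lebesgue. t \<in> {0..} \<longrightarrow> ereal \<bar>f t\<bar> \<le> ess_sup_abs {0..} f"
    by (subst (asm) AE_restrict_space_iff) auto
  then have "AE t in lebesgue. t \<in> {t0..} \<longrightarrow> ereal \<bar>f t\<bar> \<le> ess_sup_abs {0..} f"
    by eventually_elim (use assms(3) in auto)
  then have "AE t in restrict_space lebesgue {t0..}. ereal \<bar>f t\<bar> \<le> ess_sup_abs {0..} f"
    by (subst AE_restrict_space_iff) auto
  then have "ess_sup_abs {t0..} f \<le> ess_sup_abs {0..} f"
    unfolding ess_sup_abs_def[of "{t0..}"] by (rule esssup_I[OF m])
  then show ?thesis using assms(2) unfolding ess_bounded_on_def by auto
qed




lemma ac_sub:
  assumes "abs_cont_on a b f" "a \<le> a'" "b' \<le> b"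
  shows "abs_cont_on a' b' f"
  unfolding abs_cont_on_def
proof (intro allI impI)
  fix e :: real assume e: "e > 0"
  obtain \<delta> where \<delta>: "\<delta> > 0" and H: "\<forall>(n::nat) (u::nat \<Rightarrow> real) (v::nat \<Rightarrow> real). (\<forall>i<n. a \<le> u i \<and> u i \<le> v i \<and> v i \<le> b) \<and>
         (\<forall>i<n. \<forall>j<n. i \<noteq> j \<longrightarrow> v i \<le> u j \<or> v j \<le> u i) \<and>
         (\<Sum>i<n. v i - u i) < \<delta> \<longrightarrow> (\<Sum>i<n. \<bar>f (v i) - f (u i)\<bar>) < e"
    using assms(1) e unfolding abs_cont_on_def by blast
  show "\<exists>\<delta>>0. \<forall>(n::nat) (u::nat \<Rightarrow> real) (v::nat \<Rightarrow> real). (\<forall>i<n. a' \<le> u i \<and> u i \<le> v i \<and> v i \<le> b') \<and>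
         (\<forall>i<n. \<forall>j<n. i \<noteq> j \<longrightarrow> v i \<le> u j \<or> v j \<le> u i) \<and>
         (\<Sum>i<n. v i - u i) < \<delta> \<longrightarrow> (\<Sum>i<n. \<bar>f (v i) - f (u i)\<bar>) < e"
  proof (intro exI[of _ \<delta>] conjI allI impI)
    fix n :: nat and u v :: "nat \<Rightarrow> real"
    assume A: "(\<forall>i<n. a' \<le> u i \<and> u i \<le> v i \<and> v i \<le> b') \<and>
         (\<forall>i<n. \<forall>j<n. i \<noteq> j \<longrightarrow> v i \<le> u j \<or> v j \<le> u i) \<and> (\<Sum>i<n. v i - u i) < \<delta>"
    then have "(\<forall>i<n. a \<le> u i \<and> u i \<le> v i \<and> v i \<le> b)" using assms(2,3) by force
    then show "(\<Sum>i<n. \<bar>f (v i) - f (u i)\<bar>) < e" using H A by blast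
  qed (rule \<delta>)
qed

lemma ac_neg:
  assumes "abs_cont_on a b f"
  shows "abs_cont_on a b (\<lambda>x. - f x)"
  using assms unfolding abs_cont_on_def by (simp add: abs_minus_commute)

lemma ac_add_lip:
  assumes "abs_cont_on a b f" "K \<ge> 0"
    "\<And>x y. a \<le> x \<Longrightarrow> x \<le> y \<Longrightarrow> y \<le> b \<Longrightarrow> \<bar>g y - g x\<bar> \<le> K * (y - x)"
  shows "abs_cont_on a b (\<lambda>x. f x + g x)"
  unfolding abs_cont_on_def
proof (intro allI impI)
  fix e :: real assume e: "e > 0"
  obtain \<delta> where \<delta>: "\<delta> > 0" and H: "\<forall>(n::nat) (u::nat \<Rightarrow> real) (v::nat \<Rightarrow> real). (\<forall>i<n. a \<le> u i \<and> u i \<le> v i \<and> v i \<le> b) \<and>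
         (\<forall>i<n. \<forall>j<n. i \<noteq> j \<longrightarrow> v i \<le> u j \<or> v j \<le> u i) \<and>
         (\<Sum>i<n. v i - u i) < \<delta> \<longrightarrow> (\<Sum>i<n. \<bar>f (v i) - f (u i)\<bar>) < e / 2"
    using assms(1) half_gt_zero[OF e] unfolding abs_cont_on_def by blast
  define \<delta>' where "\<delta>' = min \<delta> (e / (2 * (K + 1)))"
  have \<delta>': "\<delta>' > 0" unfolding \<delta>'_def using \<delta> e assms(2) by simp
  show "\<exists>\<delta>>0. \<forall>(n::nat) (u::nat \<Rightarrow> real) (v::nat \<Rightarrow> real). (\<forall>i<n. a \<le> u i \<and> u i \<le> v i \<and> v i \<le> b) \<and>
         (\<forall>i<n. \<forall>j<n. i \<noteq> j \<longrightarrow> v i \<le> u j \<or> v j \<le> u i) \<and>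
         (\<Sum>i<n. v i - u i) < \<delta> \<longrightarrow> (\<Sum>i<n. \<bar>f (v i) + g (v i) - (f (u i) + g (u i))\<bar>) < e"
  proof (intro exI[of _ \<delta>'] conjI allI impI)
    fix n :: nat and u v :: "nat \<Rightarrow> real"
    assume A: "(\<forall>i<n. a \<le> u i \<and> u i \<le> v i \<and> v i \<le> b) \<and>
         (\<forall>i<n. \<forall>j<n. i \<noteq> j \<longrightarrow> v i \<le> u j \<or> v j \<le> u i) \<and> (\<Sum>i<n. v i - u i) < \<delta>'"
    have s: "(\<Sum>i<n. v i - u i) < \<delta>" "(\<Sum>i<n. v i - u i) < e / (2 * (K + 1))"
      using A unfolding \<delta>'_def by auto
    have f1: "(\<Sum>i<n. \<bar>f (v i) - f (u i)\<bar>) < e / 2" using H A s(1) by blast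
    have "(\<Sum>i<n. \<bar>f (v i) + g (v i) - (f (u i) + g (u i))\<bar>) \<le> (\<Sum>i<n. \<bar>f (v i) - f (u i)\<bar> + K * (v i - u i))"
    proof (intro sum_mono)
      fix i assume "i \<in> {..<n}"
      then have "\<bar>g (v i) - g (u i)\<bar> \<le> K * (v i - u i)" using A assms(3) by auto
      then show "\<bar>f (v i) + g (v i) - (f (u i) + g (u i))\<bar> \<le> \<bar>f (v i) - f (u i)\<bar> + K * (v i - u i)" by linarith
    qed
    also have "\<dots> = (\<Sum>i<n. \<bar>f (v i) - f (u i)\<bar>) + K * (\<Sum>i<n. v i - u i)"
      by (simp add: sum.distrib sum_distrib_left)
    also have "K * (\<Sum>i<n. v i - u i) \<le> K * (e / (2 * (K + 1)))"
      using s(2) assms(2) by (intro mult_left_mono) auto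
    also have "K * (e / (2 * (K + 1))) \<le> e / 2"
    proof -
      have "K * (e / (2 * (K + 1))) = (e / 2) * (K / (K + 1))" by simp
      also have "\<dots> \<le> (e / 2) * 1" using e assms(2) by (intro mult_left_mono) auto
      finally show ?thesis by simp
    qed
    finally show "(\<Sum>i<n. \<bar>f (v i) + g (v i) - (f (u i) + g (u i))\<bar>) < e" using f1 by linarith
  qed (rule \<delta>')
qed

lemma ac_cont:
  assumes "abs_cont_on a b f"
  shows "continuous_on {a..b} f"
  unfolding continuous_on_iff
proof (intro ballI allI impI)
  fix x e assume x: "x \<in> {a..b}" and e: "(e::real) > 0"
  obtain \<delta> where \<delta>: "\<delta> > 0" and H: "\<forall>(n::nat) (u::nat \<Rightarrow> real) (v::nat \<Rightarrow> real). (\<forall>i<n. a \<le> u i \<and> u i \<le> v i \<and> v i \<le> b) \<and>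
         (\<forall>i<n. \<forall>j<n. i \<noteq> j \<longrightarrow> v i \<le> u j \<or> v j \<le> u i) \<and>
         (\<Sum>i<n. v i - u i) < \<delta> \<longrightarrow> (\<Sum>i<n. \<bar>f (v i) - f (u i)\<bar>) < e"
    using assms e unfolding abs_cont_on_def by blast
  show "\<exists>d>0. \<forall>x'\<in>{a..b}. dist x' x < d \<longrightarrow> dist (f x') (f x) < e"
  proof (intro exI[of _ \<delta>] conjI ballI impI)
    fix x' assume x': "x' \<in> {a..b}" "dist x' x < \<delta>"
    have c1: "\<forall>i<(1::nat). a \<le> min x x' \<and> min x x' \<le> max x x' \<and> max x x' \<le> b" using x x' by auto
    have c2: "\<forall>i<(1::nat). \<forall>j<(1::nat). i \<noteq> j \<longrightarrow> max x x' \<le> min x x' \<or> max x x' \<le> min x x'" by auto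
    have c3: "(\<Sum>i<(1::nat). max x x' - min x x') < \<delta>" using x'(2) by (cases "x \<le> x'") (auto simp: dist_real_def)
    have "(\<Sum>i<(1::nat). \<bar>f (max x x') - f (min x x')\<bar>) < e"
      using H[rule_format, of 1 "\<lambda>_. min x x'" "\<lambda>_. max x x'"] c1 c2 c3 by blast
    then have "\<bar>f (max x x') - f (min x x')\<bar> < e" by simp
    then show "dist (f x') (f x) < e"
      by (cases "x \<le> x'") (simp_all add: dist_real_def max_def min_def abs_minus_commute)
  qed (rule \<delta>)
qed

lemma barrier:
  fixes F :: "real \<Rightarrow> real"
  assumes ab: "a \<le> b" and ac: "abs_cont_on a b F" and Fa: "F a \<le> 0"
    and der: "AE t in lebesgue. t \<in> {a..b} \<longrightarrow> F t > 0 \<longrightarrow> (\<exists>D. (F has_real_derivative D) (at t) \<and> D \<le> 0)"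
  shows "F b \<le> 0"
proof (rule ccontr)
  assume nb: "\<not> F b \<le> 0"
  define S where "S = {a..b} \<inter> F -` {..0}"
  have cl: "closed S" unfolding S_def by (rule continuous_closed_preimage[OF ac_cont[OF ac]]) auto
  have aS: "a \<in> S" unfolding S_def using ab Fa by auto
  have bdd: "bdd_above S" unfolding S_def by (rule bdd_aboveI[of _ b]) auto
  define \<sigma> where "\<sigma> = Sup S"
  have \<sigma>S: "\<sigma> \<in> S" unfolding \<sigma>_def using closed_contains_Sup[of S] aS bdd cl by blast
  then have \<sigma>: "a \<le> \<sigma>" "\<sigma> \<le> b" "F \<sigma> \<le> 0" unfolding S_def by auto
  have pos: "F s > 0" if "s \<in> {\<sigma><..b}" for s
  proof (rule ccontr)
    assume "\<not> F s > 0"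
    then have "s \<in> S" using that \<sigma> unfolding S_def by auto
    then have "s \<le> \<sigma>" unfolding \<sigma>_def using bdd by (rule cSup_upper)
    then show False using that by auto
  qed
  have "AE t in lebesgue. t \<noteq> \<sigma>" by (rule AE_completion[OF AE_lborel_singleton])
  then have "AE t in lebesgue. t \<in> {\<sigma>..b} \<longrightarrow> (\<exists>D. (F has_real_derivative D) (at t) \<and> D \<le> 0)"
    using der
  proof eventually_elim
    case (elim t)
    show ?case
    proof
      assume "t \<in> {\<sigma>..b}"
      then have "t \<in> {\<sigma><..b}" "t \<in> {a..b}" using elim(1) \<sigma> by auto
      then show "\<exists>D. (F has_real_derivative D) (at t) \<and> D \<le> 0" using elim(2) pos by blast
    qed
  qed
  then have "F b \<le> F \<sigma>" using ac_mono[OF \<sigma>(2) ac_sub[OF ac \<sigma>(1) order_refl]] by blast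
  then show False using nb \<sigma>(3) by simp
qed

lemma lip_deriv:
  fixes F :: "real \<Rightarrow> real"
  assumes pq: "p \<le> q" and ac: "abs_cont_on p q F" and K: "K \<ge> 0"
    and der: "AE t in lebesgue. t \<in> {p..q} \<longrightarrow> (\<exists>D. (F has_real_derivative D) (at t) \<and> \<bar>D\<bar> \<le> K)"
    and wv: "p \<le> w" "w \<le> v" "v \<le> q"
  shows "\<bar>F v - F w\<bar> \<le> K * (v - w)"
proof -
  define g where "g x = - K * x" for x :: real
  have glip: "\<bar>g y - g x\<bar> \<le> K * (y - x)" if "x \<le> y" for x y
  proof -
    have "K * (y - x) \<ge> 0" using that K by simp
    moreover have "g y - g x = - (K * (y - x))" by (simp add: g_def algebra_simps)
    ultimately show ?thesis by simp
  qed
  have ac': "abs_cont_on w v F" using ac_sub[OF ac wv(1) wv(3)] .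
  have 1: "F v + g v \<le> F w + g w"
  proof (rule ac_mono[OF wv(2) ac_add_lip[OF ac' K glip]])
    show "AE t in lebesgue. t \<in> {w..v} \<longrightarrow> (\<exists>D. ((\<lambda>x. F x + g x) has_real_derivative D) (at t) \<and> D \<le> 0)"
      using der
    proof eventually_elim
      case (elim t)
      show ?case
      proof
        assume "t \<in> {w..v}"
        then obtain D where D: "(F has_real_derivative D) (at t)" "\<bar>D\<bar> \<le> K" using elim wv by auto
        have "((\<lambda>x. F x + g x) has_real_derivative (D + - K)) (at t)"
          unfolding g_def by (auto intro!: derivative_eq_intros D(1))
        then show "\<exists>D. ((\<lambda>x. F x + g x) has_real_derivative D) (at t) \<and> D \<le> 0" using D(2) by force
      qed
    qed
  qed
  have 2: "- F v + g v \<le> - F w + g w"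
  proof (rule ac_mono[OF wv(2) ac_add_lip[OF ac_neg[OF ac'] K glip]])
    show "AE t in lebesgue. t \<in> {w..v} \<longrightarrow> (\<exists>D. ((\<lambda>x. - F x + g x) has_real_derivative D) (at t) \<and> D \<le> 0)"
      using der
    proof eventually_elim
      case (elim t)
      show ?case
      proof
        assume "t \<in> {w..v}"
        then obtain D where D: "(F has_real_derivative D) (at t)" "\<bar>D\<bar> \<le> K" using elim wv by auto
        have "((\<lambda>x. - F x + g x) has_real_derivative (- D + - K)) (at t)"
          unfolding g_def by (auto intro!: derivative_eq_intros D(1))
        then show "\<exists>D. ((\<lambda>x. - F x + g x) has_real_derivative D) (at t) \<and> D \<le> 0" using D(2) by force
      qed
    qed
  qed
  have e: "K * (v - w) = K * v - K * w" by (simp add: right_diff_distrib)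
  have "F v - F w \<le> K * (v - w)" "F w - F v \<le> K * (v - w)" using 1 2 e unfolding g_def by linarith+
  then show ?thesis by (simp add: abs_le_iff)
qed




lemma AE_exists_point:
  assumes "AE t in lebesgue. t \<ge> (t0::real) \<longrightarrow> P t"
  shows "\<exists>t\<ge>t0. P t"
proof (rule ccontr)
  assume nt: "\<not> ?thesis"
  from assms obtain N where N: "{x \<in> space lebesgue. \<not> (x \<ge> t0 \<longrightarrow> P x)} \<subseteq> N" "emeasure lebesgue N = 0" "N \<in> sets lebesgue"
    by (rule AE_E)
  have "{t0..t0+1} \<subseteq> N" using N(1) nt by auto
  moreover have "negligible N" using N(2,3) by (simp add: negligible_iff_null_sets null_sets_def)
  ultimately have "negligible (cbox t0 (t0+1))" using negligible_subset by (metis cbox_interval)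
  then have "box t0 (t0+1) = {}" using negligible_interval(1) by blast
  moreover have "t0 + 1/2 \<in> box t0 (t0+1)" by (simp add: box_real)
  ultimately show False by blast
qed

locale dde =
  fixes t0 :: real and m :: nat and c :: "real \<Rightarrow> real" and d h :: "nat \<Rightarrow> real \<Rightarrow> real"
    and \<tau> :: "nat \<Rightarrow> real" and \<alpha>0 C :: real and Dk B :: "nat \<Rightarrow> real"
  assumes tau_nn: "\<And>k. k < m \<Longrightarrow> \<tau> k \<ge> 0"
    and hd: "\<And>k t. k < m \<Longrightarrow> t \<ge> t0 \<Longrightarrow> t - \<tau> k \<le> h k t \<and> h k t \<le> t"
    and alpha0: "\<alpha>0 > 0"
    and B_nn: "\<And>k. k < m \<Longrightarrow> B k \<ge> 0"
    and good: "AE t in lebesgue. t \<ge> t0 \<longrightarrow> ((\<Sum>k<m. d k t) - c t \<ge> \<alpha>0 \<and> \<bar>c t\<bar> \<le> C \<and>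
        (\<forall>k<m. \<bar>d k t\<bar> \<le> Dk k \<and> \<bar>d k t\<bar> \<le> ((\<Sum>j<m. d j t) - c t) * B k))"
    and K0: "(C + (\<Sum>k<m. Dk k)) * (\<Sum>k<m. \<tau> k * B k) < 1"
begin

definition "aa t = (\<Sum>k<m. d k t) - c t"
definition "L = C + (\<Sum>k<m. Dk k)"
definition "KK = L * (\<Sum>k<m. \<tau> k * B k)"
definition "G t \<longleftrightarrow> (aa t \<ge> \<alpha>0 \<and> \<bar>c t\<bar> \<le> C \<and> (\<forall>k<m. \<bar>d k t\<bar> \<le> Dk k \<and> \<bar>d k t\<bar> \<le> aa t * B k))"
definition "sol t1 y \<longleftrightarrow> (\<forall>b\<ge>t1. abs_cont_on t1 b y) \<and>
   (AE u in lebesgue. u \<ge> t1 \<longrightarrow> (y has_real_derivative (c u * y u - (\<Sum>k<m. d k u * y (h k u)))) (at u))"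

lemma goodG: "AE t in lebesgue. t \<ge> t0 \<longrightarrow> G t"
  using good unfolding G_def aa_def .

lemma KK_lt: "KK < 1" using K0 unfolding KK_def L_def .

lemma G_props:
  assumes "G t"
  shows "aa t > 0" "aa t \<le> L" "C \<ge> 0" "\<And>k. k < m \<Longrightarrow> Dk k \<ge> 0" "L \<ge> 0"
proof -
  show a: "aa t > 0" using assms alpha0 unfolding G_def by auto
  show C: "C \<ge> 0" using assms unfolding G_def by (meson abs_ge_zero order_trans)
  show D: "\<And>k. k < m \<Longrightarrow> Dk k \<ge> 0" using assms unfolding G_def by (meson abs_ge_zero order_trans)
  show "L \<ge> 0" unfolding L_def using C D by (intro add_nonneg_nonneg sum_nonneg) auto
  have "aa t \<le> (\<Sum>k<m. \<bar>d k t\<bar>) + \<bar>c t\<bar>" unfolding aa_def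
    using sum_abs[of "\<lambda>k. d k t" "{..<m}"] by linarith
  also have "\<dots> \<le> (\<Sum>k<m. Dk k) + C" using assms unfolding G_def
    by (intro add_mono sum_mono) auto
  finally show "aa t \<le> L" unfolding L_def by simp
qed

lemma exists_G: "\<exists>t\<ge>t0. G t" using AE_exists_point[OF goodG] .

lemma C_nn: "C \<ge> 0" and L_nn: "L \<ge> 0" and Dk_nn: "\<And>k. k < m \<Longrightarrow> Dk k \<ge> 0"
  using exists_G G_props by blast+

lemma KK_nn: "KK \<ge> 0"
  unfolding KK_def using L_nn tau_nn B_nn by (intro mult_nonneg_nonneg sum_nonneg) auto

lemma sol_neg: "sol t1 y \<Longrightarrow> sol t1 (\<lambda>x. - y x)"
  unfolding sol_def
proof (intro conjI allI impI)
  assume A: "(\<forall>b\<ge>t1. abs_cont_on t1 b y) \<and> (AE u in lebesgue. t1 \<le> u \<longrightarrow>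
      (y has_real_derivative c u * y u - (\<Sum>k<m. d k u * y (h k u))) (at u))"
  fix b assume "t1 \<le> b" then show "abs_cont_on t1 b (\<lambda>x. - y x)" using A ac_neg by blast
next
  assume A: "(\<forall>b\<ge>t1. abs_cont_on t1 b y) \<and> (AE u in lebesgue. t1 \<le> u \<longrightarrow>
      (y has_real_derivative c u * y u - (\<Sum>k<m. d k u * y (h k u))) (at u))"
  then have "AE u in lebesgue. t1 \<le> u \<longrightarrow>
      (y has_real_derivative c u * y u - (\<Sum>k<m. d k u * y (h k u))) (at u)" by blast
  then show "AE u in lebesgue. t1 \<le> u \<longrightarrow>
      ((\<lambda>x. - y x) has_real_derivative c u * - y u - (\<Sum>k<m. d k u * - y (h k u))) (at u)"
  proof eventually_elim
    case (elim u)
    show ?case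
    proof
      assume "t1 \<le> u"
      then have "(y has_real_derivative c u * y u - (\<Sum>k<m. d k u * y (h k u))) (at u)" using elim by blast
      then have D: "((\<lambda>x. - y x) has_real_derivative - (c u * y u - (\<Sum>k<m. d k u * y (h k u)))) (at u)"
        by (rule DERIV_minus)
      have e: "c u * - y u - (\<Sum>k<m. d k u * - y (h k u)) = - (c u * y u - (\<Sum>k<m. d k u * y (h k u)))"
        by (simp add: sum_negf)
      show "((\<lambda>x. - y x) has_real_derivative c u * - y u - (\<Sum>k<m. d k u * - y (h k u))) (at u)"
        unfolding e by (rule D)
    qed
  qed
qed

lemma rhs_ident:
  "c u * y u - (\<Sum>k<m. d k u * y (h k u)) = - aa u * y u + (\<Sum>k<m. d k u * (y u - y (h k u)))"
  unfolding aa_def by (simp add: algebra_simps sum_subtractf sum_distrib_right sum_distrib_left)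

lemma sol_der:
  assumes "sol t1 y" "t0 \<le> t1"
  shows "AE u in lebesgue. u \<ge> t1 \<longrightarrow> G u \<and> (y has_real_derivative (c u * y u - (\<Sum>k<m. d k u * y (h k u)))) (at u)"
proof -
  have "AE u in lebesgue. u \<ge> t1 \<longrightarrow> (y has_real_derivative (c u * y u - (\<Sum>k<m. d k u * y (h k u)))) (at u)"
    using assms(1) unfolding sol_def by blast
  then show ?thesis using goodG
    by eventually_elim (use assms(2) in auto)
qed

lemma sol_ac: "sol t1 y \<Longrightarrow> t1 \<le> p \<Longrightarrow> p \<le> q \<Longrightarrow> abs_cont_on p q y"
  unfolding sol_def using ac_sub by (meson order_refl order_trans)

lemma LIP:
  assumes sol: "sol t1 y" and t1: "t0 \<le> t1" and pq: "t1 \<le> p" "p \<le> q"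
    and bnd: "\<And>u. u \<in> {p..q} \<Longrightarrow> \<bar>y u\<bar> \<le> N \<and> (\<forall>k<m. \<bar>y (h k u)\<bar> \<le> N)"
    and wv: "p \<le> w" "w \<le> v" "v \<le> q"
  shows "\<bar>y v - y w\<bar> \<le> L * N * (v - w)"
proof -
  have N: "N \<ge> 0" using bnd[of p] pq by auto
  show ?thesis
  proof (rule lip_deriv[OF pq(2) sol_ac[OF sol pq] _ _ wv])
    show "L * N \<ge> 0" using L_nn N by simp
    show "AE t in lebesgue. t \<in> {p..q} \<longrightarrow> (\<exists>D. (y has_real_derivative D) (at t) \<and> \<bar>D\<bar> \<le> L * N)"
      using sol_der[OF sol t1]
    proof eventually_elim
      case (elim u)
      show ?case
      proof
        assume u: "u \<in> {p..q}"
        then have Gu: "G u" and der: "(y has_real_derivative (c u * y u - (\<Sum>k<m. d k u * y (h k u)))) (at u)"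
          using elim pq by auto
        have b: "\<bar>y u\<bar> \<le> N" "\<And>k. k < m \<Longrightarrow> \<bar>y (h k u)\<bar> \<le> N" using bnd[OF u] by auto
        have "\<bar>c u * y u\<bar> \<le> C * N"
          unfolding abs_mult using Gu b(1) N unfolding G_def by (intro mult_mono) auto
        moreover have "\<bar>\<Sum>k<m. d k u * y (h k u)\<bar> \<le> (\<Sum>k<m. Dk k) * N"
        proof -
          have "\<bar>\<Sum>k<m. d k u * y (h k u)\<bar> \<le> (\<Sum>k<m. \<bar>d k u * y (h k u)\<bar>)" by (rule sum_abs)
          also have "\<dots> \<le> (\<Sum>k<m. Dk k * N)"
            unfolding abs_mult using Gu b(2) N unfolding G_def by (intro sum_mono mult_mono) auto
          finally show ?thesis by (simp add: sum_distrib_right)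
        qed
        ultimately have "\<bar>c u * y u - (\<Sum>k<m. d k u * y (h k u))\<bar> \<le> L * N"
          unfolding L_def by (simp add: distrib_right)
        then show "\<exists>D. (y has_real_derivative D) (at u) \<and> \<bar>D\<bar> \<le> L * N" using der by blast
      qed
    qed
  qed
qed


definition "kap t1 u = L * (\<Sum>k<m. B k * min (u - t1) (\<tau> k))"
definition "Sder t1 u = (\<Sum>k<m. B k * (if u - t1 < \<tau> k then 1 else 0))"

lemma kap_le: "kap t1 u \<le> KK"
  unfolding kap_def KK_def
proof (rule mult_left_mono[OF _ L_nn])
  show "(\<Sum>k<m. B k * min (u - t1) (\<tau> k)) \<le> (\<Sum>k<m. \<tau> k * B k)"
    using B_nn by (intro sum_mono) (auto simp: mult.commute intro: mult_left_mono)
qed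

lemma kap_start: "kap t1 t1 = 0"
  unfolding kap_def using tau_nn by (simp add: min_def)

lemma Sder_nn: "Sder t1 u \<ge> 0"
  unfolding Sder_def using B_nn by (intro sum_nonneg) auto

lemma kap_lip:
  assumes "x \<le> z"
  shows "\<bar>kap t1 z - kap t1 x\<bar> \<le> (L * (\<Sum>k<m. B k)) * (z - x)"
proof -
  have "kap t1 z - kap t1 x = L * (\<Sum>k<m. B k * (min (z - t1) (\<tau> k) - min (x - t1) (\<tau> k)))"
    unfolding kap_def by (simp add: right_diff_distrib sum_subtractf)
  moreover have "0 \<le> (\<Sum>k<m. B k * (min (z - t1) (\<tau> k) - min (x - t1) (\<tau> k)))"
    using B_nn assms by (intro sum_nonneg mult_nonneg_nonneg) auto
  moreover have "(\<Sum>k<m. B k * (min (z - t1) (\<tau> k) - min (x - t1) (\<tau> k))) \<le> (\<Sum>k<m. B k * (z - x))"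
    using B_nn assms by (intro sum_mono mult_left_mono) auto
  ultimately show ?thesis using L_nn
    by (simp add: sum_distrib_right[symmetric] mult.assoc mult_left_mono)
qed

lemma min_deriv:
  assumes "u - t1 \<noteq> (s::real)"
  shows "((\<lambda>x. min (x - t1) s) has_real_derivative (if u - t1 < s then 1 else 0)) (at u)"
proof (cases "u - t1 < s")
  case True
  have "((\<lambda>x. x - t1) has_real_derivative 1) (at u)" by (auto intro!: derivative_eq_intros)
  then have "((\<lambda>x. min (x - t1) s) has_real_derivative 1) (at u)"
    by (rule has_field_derivative_transform_within_open[where S = "{..<t1 + s}"]) (use True in auto)
  then show ?thesis using True by simp
next
  case False
  then have F: "u - t1 > s" using assms by auto
  have "((\<lambda>x. s) has_real_derivative 0) (at u)" by (auto intro!: derivative_eq_intros)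
  then have "((\<lambda>x. min (x - t1) s) has_real_derivative 0) (at u)"
    by (rule has_field_derivative_transform_within_open[where S = "{t1 + s<..}"]) (use F in auto)
  then show ?thesis using False by simp
qed

lemma kap_deriv:
  assumes "\<And>k. k < m \<Longrightarrow> u - t1 \<noteq> \<tau> k"
  shows "(kap t1 has_real_derivative L * Sder t1 u) (at u)"
proof -
  have "((\<lambda>x. \<Sum>k<m. B k * min (x - t1) (\<tau> k)) has_real_derivative
      (\<Sum>k<m. B k * (if u - t1 < \<tau> k then 1 else 0))) (at u)"
    by (intro DERIV_sum DERIV_cmult min_deriv assms) auto
  then have "((\<lambda>x. L * (\<Sum>k<m. B k * min (x - t1) (\<tau> k))) has_real_derivative
      L * (\<Sum>k<m. B k * (if u - t1 < \<tau> k then 1 else 0))) (at u)"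
    by (rule DERIV_cmult)
  then show ?thesis unfolding kap_def[abs_def] Sder_def by simp
qed


lemma BOUND:
  assumes sol: "sol t1 y" and t1: "t0 \<le> t1" and T: "t1 \<le> T"
    and Psi: "0 \<le> \<Psi>" "\<Psi> \<le> N" and Phi: "0 \<le> \<Phi>" "y t1 \<le> \<Phi>"
    and bnd: "\<And>u. u \<in> {t1..T} \<Longrightarrow> \<bar>y u\<bar> \<le> N \<and> (\<forall>k<m. \<bar>y (h k u)\<bar> \<le> N)"
    and jump: "\<And>u k. u \<in> {t1..T} \<Longrightarrow> k < m \<Longrightarrow> h k u < t1 \<Longrightarrow> \<bar>y t1 - y (h k u)\<bar> \<le> \<Psi>"
    and u0: "u0 \<in> {t1..T}"
  shows "y u0 \<le> \<Phi> + N * kap t1 u0"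
proof -
  have N: "N \<ge> 0" using Psi by simp
  define g where "g x = - \<Phi> - N * kap t1 x" for x
  define K where "K = N * (L * (\<Sum>k<m. B k))"
  have K: "K \<ge> 0" unfolding K_def using N L_nn B_nn by (intro mult_nonneg_nonneg sum_nonneg) auto
  have glip: "\<bar>g z - g x\<bar> \<le> K * (z - x)" if "t1 \<le> x" "x \<le> z" "z \<le> u0" for x z
  proof -
    have "\<bar>g z - g x\<bar> = N * \<bar>kap t1 z - kap t1 x\<bar>" unfolding g_def using N
      by (simp add: abs_mult right_diff_distrib[symmetric] abs_minus_commute)
    also have "\<dots> \<le> N * ((L * (\<Sum>k<m. B k)) * (z - x))" using kap_lip[OF that(2)] N by (rule mult_left_mono)
    finally show ?thesis unfolding K_def by (simp add: mult.assoc)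
  qed
  have u0': "t1 \<le> u0" "u0 \<le> T" using u0 by auto
  have ac: "abs_cont_on t1 u0 (\<lambda>x. y x + g x)"
    by (rule ac_add_lip[OF sol_ac[OF sol order_refl u0'(1)] K glip]) auto
  have Ft1: "y t1 + g t1 \<le> 0" unfolding g_def kap_start using Phi by simp
  have kinks: "AE t in lebesgue. t \<notin> (\<lambda>k. t1 + \<tau> k) ` {..<m}"
  proof (rule AE_not_in)
    have "negligible ((\<lambda>k. t1 + \<tau> k) ` {..<m})" by (intro negligible_finite) auto
    then show "(\<lambda>k. t1 + \<tau> k) ` {..<m} \<in> null_sets lebesgue" by (simp add: negligible_iff_null_sets)
  qed
  have "y u0 + g u0 \<le> 0"
  proof (rule barrier[OF u0'(1) ac Ft1])
    show "AE t in lebesgue. t \<in> {t1..u0} \<longrightarrow> 0 < y t + g t \<longrightarrow>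
        (\<exists>D. ((\<lambda>x. y x + g x) has_real_derivative D) (at t) \<and> D \<le> 0)"
      using sol_der[OF sol t1] kinks
    proof eventually_elim
      case (elim t)
      show ?case
      proof (intro impI)
        assume tI: "t \<in> {t1..u0}" and pos: "0 < y t + g t"
        have tT: "t1 \<le> t" "t \<le> T" using tI u0' by auto
        have Gt: "G t" and dy: "(y has_real_derivative (c t * y t - (\<Sum>k<m. d k t * y (h k t)))) (at t)"
          using elim tT by auto
        have nk: "t - t1 \<noteq> \<tau> k" if "k < m" for k using elim(2) that by force
        have dk: "(kap t1 has_real_derivative L * Sder t1 t) (at t)" by (rule kap_deriv[OF nk])
        have dF: "((\<lambda>x. y x + g x) has_real_derivative
            (c t * y t - (\<Sum>k<m. d k t * y (h k t))) + (- (N * (L * Sder t1 t)))) (at t)"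
          unfolding g_def by (auto intro!: derivative_eq_intros dy dk)
        have aa: "aa t > 0" "aa t \<le> L" using G_props[OF Gt] by auto
        have tb: "d k t * (y t - y (h k t)) \<le> aa t * B k * (L * N * min (t - t1) (\<tau> k) + \<Psi> * (if t - t1 < \<tau> k then 1 else 0))"
          if k: "k < m" for k
        proof -
          have hk: "t - \<tau> k \<le> h k t" "h k t \<le> t" using hd[OF k] tT t1 by auto
          have dd: "\<bar>d k t\<bar> \<le> aa t * B k" using Gt k unfolding G_def by auto
          have Delta: "\<bar>y t - y (h k t)\<bar> \<le> L * N * min (t - t1) (\<tau> k) + \<Psi> * (if t - t1 < \<tau> k then 1 else 0)"
          proof (cases "h k t \<ge> t1")
            case True
            have "\<bar>y t - y (h k t)\<bar> \<le> L * N * (t - h k t)"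
              by (rule LIP[OF sol t1 order_refl T bnd]) (use True hk tT in auto)
            also have "\<dots> \<le> L * N * min (t - t1) (\<tau> k)"
              using True hk L_nn N by (intro mult_left_mono) auto
            also have "\<dots> \<le> L * N * min (t - t1) (\<tau> k) + \<Psi> * (if t - t1 < \<tau> k then 1 else 0)"
              using Psi by simp
            finally show ?thesis .
          next
            case False
            have m: "min (t - t1) (\<tau> k) = t - t1" "t - t1 < \<tau> k" using False hk by auto
            have "\<bar>y t - y t1\<bar> \<le> L * N * (t - t1)"
              by (rule LIP[OF sol t1 order_refl T bnd]) (use tT in auto)
            moreover have "\<bar>y t1 - y (h k t)\<bar> \<le> \<Psi>" using jump[OF _ k] tT False by auto
            ultimately have "\<bar>y t - y (h k t)\<bar> \<le> L * N * (t - t1) + \<Psi>" by linarith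
            then show ?thesis using m by simp
          qed
          have "d k t * (y t - y (h k t)) \<le> \<bar>d k t\<bar> * \<bar>y t - y (h k t)\<bar>"
            by (simp add: abs_mult[symmetric])
          also have "\<dots> \<le> (aa t * B k) * (L * N * min (t - t1) (\<tau> k) + \<Psi> * (if t - t1 < \<tau> k then 1 else 0))"
            using dd Delta by (intro mult_mono) auto
          finally show ?thesis .
        qed
        have sumb: "(\<Sum>k<m. d k t * (y t - y (h k t))) \<le> aa t * (N * kap t1 t + \<Psi> * Sder t1 t)"
        proof -
          have "(\<Sum>k<m. d k t * (y t - y (h k t))) \<le>
              (\<Sum>k<m. aa t * B k * (L * N * min (t - t1) (\<tau> k) + \<Psi> * (if t - t1 < \<tau> k then 1 else 0)))"
            using tb by (intro sum_mono) auto
          also have "\<dots> = aa t * (N * kap t1 t + \<Psi> * Sder t1 t)"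
            unfolding kap_def Sder_def
            by (simp add: sum_distrib_left sum.distrib algebra_simps)
          finally show ?thesis .
        qed
        have ypos: "y t > \<Phi> + N * kap t1 t" using pos unfolding g_def by simp
        have "c t * y t - (\<Sum>k<m. d k t * (y (h k t))) \<le> - aa t * y t + aa t * (N * kap t1 t + \<Psi> * Sder t1 t)"
          using rhs_ident[of t y] sumb by simp
        also have "\<dots> = aa t * (N * kap t1 t - y t) + aa t * \<Psi> * Sder t1 t" by (simp add: algebra_simps)
        also have "aa t * (N * kap t1 t - y t) \<le> 0"
          using aa ypos Phi by (intro mult_nonneg_nonpos) auto
        also have "aa t * \<Psi> * Sder t1 t \<le> L * N * Sder t1 t"
          using aa Psi Sder_nn by (intro mult_right_mono mult_mono) auto
        finally have "c t * y t - (\<Sum>k<m. d k t * (y (h k t))) + - (N * (L * Sder t1 t)) \<le> 0"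
          by (simp add: algebra_simps)
        then show "\<exists>D. ((\<lambda>x. y x + g x) has_real_derivative D) (at t) \<and> D \<le> 0" using dF by blast
      qed
    qed
  qed
  then show ?thesis unfolding g_def by simp
qed


lemma max_on:
  assumes "sol t1 y" "t1 \<le> T"
  obtains um where "um \<in> {t1..T}" "\<And>x. x \<in> {t1..T} \<Longrightarrow> \<bar>y x\<bar> \<le> \<bar>y um\<bar>"
proof -
  have "continuous_on {t1..T} y" using ac_cont[OF sol_ac[OF assms(1) order_refl assms(2)]] .
  then have "continuous_on {t1..T} (\<lambda>x. \<bar>y x\<bar>)" by (rule continuous_on_rabs)
  then obtain um where "um \<in> {t1..T}" "\<forall>x\<in>{t1..T}. \<bar>y x\<bar> \<le> \<bar>y um\<bar>"
    using continuous_attains_sup[of "{t1..T}" "\<lambda>x. \<bar>y x\<bar>"] assms(2) by auto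
  then show ?thesis using that by blast
qed

lemma FUND:
  assumes sol: "sol s y" and s: "t0 \<le> s" and ys: "y s = 1" and y0: "\<And>x. x < s \<Longrightarrow> y x = 0" and t: "s \<le> t"
  shows "\<bar>y t\<bar> \<le> 1 / (1 - KK)"
proof -
  obtain um where um: "um \<in> {s..t}" "\<And>x. x \<in> {s..t} \<Longrightarrow> \<bar>y x\<bar> \<le> \<bar>y um\<bar>"
    using max_on[OF sol t] by blast
  define N where "N = \<bar>y um\<bar>"
  have N1: "1 \<le> N" using um(2)[of s] t ys unfolding N_def by auto
  have bnd: "\<bar>y u\<bar> \<le> N \<and> (\<forall>k<m. \<bar>y (h k u)\<bar> \<le> N)" if u: "u \<in> {s..t}" for u
  proof (intro conjI allI impI)
    show "\<bar>y u\<bar> \<le> N" using um(2)[OF u] unfolding N_def .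
    fix k assume k: "k < m"
    have "h k u \<le> u" using hd[OF k, of u] u s by auto
    then show "\<bar>y (h k u)\<bar> \<le> N"
      using um(2)[of "h k u"] u y0[of "h k u"] N1 unfolding N_def by (cases "h k u < s") auto
  qed
  have bnd': "\<bar>- y u\<bar> \<le> N \<and> (\<forall>k<m. \<bar>- y (h k u)\<bar> \<le> N)" if u: "u \<in> {s..t}" for u
    using bnd[OF u] by simp
  have jump: "\<bar>y s - y (h k u)\<bar> \<le> 1" if "h k u < s" for u k using ys y0[OF that] by simp
  have jump': "\<bar>- y s - - y (h k u)\<bar> \<le> 1" if "h k u < s" for u k using ys y0[OF that] by simp
  have up: "y um \<le> 1 + N * kap s um"
    by (rule BOUND[OF sol s t _ _ _ _ bnd jump um(1)]) (use N1 ys in auto)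
  have lo: "- y um \<le> 1 + N * kap s um"
    by (rule BOUND[OF sol_neg[OF sol] s t _ _ _ _ bnd' jump' um(1)]) (use N1 ys in auto)
  have "N \<le> 1 + N * kap s um" using up lo unfolding N_def by (simp add: abs_le_iff)
  also have "\<dots> \<le> 1 + N * KK" using kap_le N1 by (simp add: mult_left_mono)
  finally have "N * (1 - KK) \<le> 1" by (simp add: algebra_simps)
  then have "N \<le> 1 / (1 - KK)" using KK_lt by (simp add: field_simps)
  then show ?thesis using um(2)[of t] t unfolding N_def by auto
qed

lemma BND1:
  assumes sol: "sol t1 y" and t1: "t0 \<le> t1" and tm: "\<And>k. k < m \<Longrightarrow> \<tau> k \<le> \<tau>m" "0 \<le> \<tau>m"
    and P0: "0 \<le> \<Phi>0" "\<And>x. x \<in> {t1 - \<tau>m..t1} \<Longrightarrow> \<bar>y x\<bar> \<le> \<Phi>0" and T: "t1 \<le> T"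
  shows "\<bar>y T\<bar> \<le> 2 * \<Phi>0 / (1 - KK)"
proof -
  obtain um where um: "um \<in> {t1..T}" "\<And>x. x \<in> {t1..T} \<Longrightarrow> \<bar>y x\<bar> \<le> \<bar>y um\<bar>"
    using max_on[OF sol T] by blast
  define Nm where "Nm = \<bar>y um\<bar>"
  define N where "N = max (2 * \<Phi>0) Nm"
  have bnd: "\<bar>y u\<bar> \<le> N \<and> (\<forall>k<m. \<bar>y (h k u)\<bar> \<le> N)" if u: "u \<in> {t1..T}" for u
  proof (intro conjI allI impI)
    show "\<bar>y u\<bar> \<le> N" using um(2)[OF u] unfolding N_def Nm_def by auto
    fix k assume k: "k < m"
    have hk: "u - \<tau> k \<le> h k u" "h k u \<le> u" using hd[OF k, of u] u t1 by auto
    show "\<bar>y (h k u)\<bar> \<le> N"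
    proof (cases "h k u < t1")
      case True
      then have "h k u \<in> {t1 - \<tau>m..t1}" using hk tm(1)[OF k] u by auto
      then show ?thesis using P0 unfolding N_def by fastforce
    next
      case False
      then show ?thesis using um(2)[of "h k u"] hk u unfolding N_def Nm_def by auto
    qed
  qed
  have bnd': "\<bar>- y u\<bar> \<le> N \<and> (\<forall>k<m. \<bar>- y (h k u)\<bar> \<le> N)" if u: "u \<in> {t1..T}" for u
    using bnd[OF u] by simp
  have t1I: "t1 \<in> {t1 - \<tau>m..t1}" using tm(2) by auto
  have yt1: "\<bar>y t1\<bar> \<le> \<Phi>0" using P0(2)[OF t1I] .
  have jump: "\<bar>y t1 - y (h k u)\<bar> \<le> 2 * \<Phi>0" if "u \<in> {t1..T}" "k < m" "h k u < t1" for u k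
  proof -
    have hk: "u - \<tau> k \<le> h k u" using hd[OF that(2), of u] that(1) t1 by auto
    then have "h k u \<in> {t1 - \<tau>m..t1}" using tm(1)[OF that(2)] that by auto
    then have "\<bar>y (h k u)\<bar> \<le> \<Phi>0" using P0(2) by blast
    then show ?thesis using yt1 by linarith
  qed
  have jump': "\<bar>- y t1 - - y (h k u)\<bar> \<le> 2 * \<Phi>0" if "u \<in> {t1..T}" "k < m" "h k u < t1" for u k
    using jump[OF that] by simp
  have N2: "2 * \<Phi>0 \<le> N" unfolding N_def by simp
  have up: "y um \<le> \<Phi>0 + N * kap t1 um"
    by (rule BOUND[OF sol t1 T _ N2 P0(1) _ bnd jump um(1)]) (use P0 yt1 in auto)
  have lo: "- y um \<le> \<Phi>0 + N * kap t1 um"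
    by (rule BOUND[OF sol_neg[OF sol] t1 T _ N2 P0(1) _ bnd' jump' um(1)]) (use P0 yt1 in auto)
  have N0: "N \<ge> 0" using N2 P0 by linarith
  have "Nm \<le> \<Phi>0 + N * kap t1 um" using up lo unfolding Nm_def by (simp add: abs_le_iff)
  also have "\<dots> \<le> \<Phi>0 + N * KK" using kap_le N0 by (simp add: mult_left_mono)
  finally have NmB: "Nm \<le> \<Phi>0 + N * KK" .
  have KK1: "0 < 1 - KK" "1 - KK \<le> 1" using KK_lt KK_nn by auto
  have "Nm \<le> 2 * \<Phi>0 / (1 - KK)"
  proof (cases "Nm \<le> 2 * \<Phi>0")
    case True
    have "2 * \<Phi>0 * (1 - KK) \<le> 2 * \<Phi>0" using KK1 P0(1) by (intro mult_left_le) auto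
    then have "2 * \<Phi>0 \<le> 2 * \<Phi>0 / (1 - KK)" using KK1 by (simp add: le_divide_eq)
    then show ?thesis using True by linarith
  next
    case False
    then have "N = Nm" unfolding N_def by simp
    then have "Nm * (1 - KK) \<le> \<Phi>0" using NmB by (simp add: algebra_simps)
    then have "Nm \<le> \<Phi>0 / (1 - KK)" using KK1 by (simp add: le_divide_eq)
    also have "\<dots> \<le> 2 * \<Phi>0 / (1 - KK)" using KK1 P0(1) by (simp add: divide_right_mono)
    finally show ?thesis .
  qed
  then show ?thesis using um(2)[of T] T unfolding Nm_def by auto
qed

end


context dde begin

lemma DECAY_DER:
  assumes sol: "sol t1 y" and t1: "t0 \<le> t1" and tm: "\<And>k. k < m \<Longrightarrow> \<tau> k \<le> \<tau>m" "0 \<le> \<tau>m"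
    and w: "t1 + \<tau>m \<le> w" and reg: "\<And>x. x \<ge> w - 2 * \<tau>m \<Longrightarrow> \<bar>y x\<bar> \<le> Np"
  shows "AE t in lebesgue. t \<ge> w \<longrightarrow> G t \<and> (y has_real_derivative (c t * y t - (\<Sum>k<m. d k t * y (h k t)))) (at t)
      \<and> c t * y t - (\<Sum>k<m. d k t * y (h k t)) \<le> aa t * (- y t + KK * Np)"
  using sol_der[OF sol t1]
proof eventually_elim
  case (elim t)
  show ?case
  proof
    assume tw: "t \<ge> w"
    have tt1: "t1 \<le> t" using w tw tm by linarith
    have Gt: "G t" and dy: "(y has_real_derivative (c t * y t - (\<Sum>k<m. d k t * y (h k t)))) (at t)"
      using elim tt1 by auto
    have aa: "aa t > 0" using G_props[OF Gt] by auto
    have Np: "Np \<ge> 0" using reg[of w] tm(2) by auto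
    have tb: "d k t * (y t - y (h k t)) \<le> aa t * B k * (L * Np * \<tau> k)" if k: "k < m" for k
    proof -
      have hk: "t - \<tau> k \<le> h k t" "h k t \<le> t" using hd[OF k] tt1 t1 by auto
      have dd: "\<bar>d k t\<bar> \<le> aa t * B k" using Gt k unfolding G_def by auto
      have p: "t1 \<le> t - \<tau>m" using w tw by linarith
      have bnd: "\<bar>y x\<bar> \<le> Np \<and> (\<forall>i<m. \<bar>y (h i x)\<bar> \<le> Np)" if x: "x \<in> {t - \<tau>m..t}" for x
      proof (intro conjI allI impI)
        show "\<bar>y x\<bar> \<le> Np" using reg x tw tm(2) by auto
        fix i assume i: "i < m"
        have "x - \<tau> i \<le> h i x" using hd[OF i, of x] x p t1 by auto
        moreover have "t - \<tau>m \<le> x" using x by auto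
        ultimately have "h i x \<ge> w - 2 * \<tau>m" using tm(1)[OF i] tw by linarith
        then show "\<bar>y (h i x)\<bar> \<le> Np" by (rule reg)
      qed
      have "\<bar>y t - y (h k t)\<bar> \<le> L * Np * (t - h k t)"
        by (rule LIP[OF sol t1 p _ bnd]) (use hk tm(1)[OF k] in auto)
      also have "\<dots> \<le> L * Np * \<tau> k" using hk L_nn Np by (intro mult_left_mono) auto
      finally have Delta: "\<bar>y t - y (h k t)\<bar> \<le> L * Np * \<tau> k" .
      have "d k t * (y t - y (h k t)) \<le> \<bar>d k t\<bar> * \<bar>y t - y (h k t)\<bar>"
        by (simp add: abs_mult[symmetric])
      also have "\<dots> \<le> (aa t * B k) * (L * Np * \<tau> k)"
        using dd Delta by (intro mult_mono) auto
      finally show ?thesis .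
    qed
    have "(\<Sum>k<m. d k t * (y t - y (h k t))) \<le> (\<Sum>k<m. aa t * B k * (L * Np * \<tau> k))"
      using tb by (intro sum_mono) auto
    also have "\<dots> = aa t * (KK * Np)"
      unfolding KK_def by (simp add: sum_distrib_left sum_distrib_right algebra_simps)
    finally have "c t * y t - (\<Sum>k<m. d k t * y (h k t)) \<le> - aa t * y t + aa t * (KK * Np)"
      using rhs_ident[of t y] by simp
    then have "c t * y t - (\<Sum>k<m. d k t * y (h k t)) \<le> aa t * (- y t + KK * Np)"
      by (simp add: algebra_simps)
    then show "G t \<and> (y has_real_derivative (c t * y t - (\<Sum>k<m. d k t * y (h k t)))) (at t)
      \<and> c t * y t - (\<Sum>k<m. d k t * y (h k t)) \<le> aa t * (- y t + KK * Np)" using Gt dy by blast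
  qed
qed


lemma STEP:
  assumes sol: "sol t1 y" and t1: "t0 \<le> t1" and tm: "\<And>k. k < m \<Longrightarrow> \<tau> k \<le> \<tau>m" "0 \<le> \<tau>m"
    and w: "t1 + \<tau>m \<le> w" and reg: "\<And>x. x \<ge> w - 2 * \<tau>m \<Longrightarrow> \<bar>y x\<bar> \<le> Np"
    and u: "w + 1 / \<alpha>0 \<le> u"
  shows "y u \<le> (1 + KK) / 2 * Np"
proof -
  define q where "q = (1 + KK) / 2"
  have Np: "Np \<ge> 0" using reg[of w] tm(2) by auto
  have qK: "KK \<le> q" using KK_lt unfolding q_def by simp
  have DD: "AE t in lebesgue. t \<ge> w \<longrightarrow> G t \<and> (y has_real_derivative (c t * y t - (\<Sum>k<m. d k t * y (h k t)))) (at t)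
      \<and> c t * y t - (\<Sum>k<m. d k t * y (h k t)) \<le> aa t * (- y t + KK * Np)"
    by (rule DECAY_DER[OF sol t1 tm w reg])
  have a0: "1 / \<alpha>0 > 0" using alpha0 by simp
  have wt1: "t1 \<le> w" using w tm(2) by linarith
  have ywN: "y w \<le> Np" using reg[of w] tm(2) by auto
  have case1: "\<exists>w1\<in>{w..w + 1 / \<alpha>0}. y w1 \<le> q * Np"
  proof (rule ccontr)
    assume "\<not> ?thesis"
    then have big: "\<And>x. x \<in> {w..w + 1 / \<alpha>0} \<Longrightarrow> y x > q * Np" by force
    define \<eta> where "\<eta> = (q - KK) * Np"
    have \<eta>: "\<eta> \<ge> 0" unfolding \<eta>_def using qK Np by simp
    define g where "g x = \<alpha>0 * \<eta> * x" for x
    have K: "\<alpha>0 * \<eta> \<ge> 0" using alpha0 \<eta> by simp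
    have glip: "\<bar>g z - g x\<bar> \<le> (\<alpha>0 * \<eta>) * (z - x)" if "x \<le> z" for x z
    proof -
      have "g z - g x = (\<alpha>0 * \<eta>) * (z - x)" unfolding g_def by (simp add: algebra_simps)
      then show ?thesis using K that by simp
    qed
    have ac: "abs_cont_on w (w + 1 / \<alpha>0) (\<lambda>x. y x + g x)"
      by (rule ac_add_lip[OF sol_ac[OF sol wt1] K glip]) (use a0 in auto)
    have "y (w + 1 / \<alpha>0) + g (w + 1 / \<alpha>0) \<le> y w + g w"
    proof (rule ac_mono[OF _ ac])
      show "w \<le> w + 1 / \<alpha>0" using a0 by simp
      show "AE t in lebesgue. t \<in> {w..w + 1 / \<alpha>0} \<longrightarrow> (\<exists>D. ((\<lambda>x. y x + g x) has_real_derivative D) (at t) \<and> D \<le> 0)"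
        using DD
      proof eventually_elim
        case (elim t)
        show ?case
        proof
          assume tI: "t \<in> {w..w + 1 / \<alpha>0}"
          then have Gt: "G t" and dy: "(y has_real_derivative (c t * y t - (\<Sum>k<m. d k t * y (h k t)))) (at t)"
            and rb: "c t * y t - (\<Sum>k<m. d k t * y (h k t)) \<le> aa t * (- y t + KK * Np)" using elim by auto
          have aa: "aa t \<ge> \<alpha>0" using Gt unfolding G_def by auto
          have dF: "((\<lambda>x. y x + g x) has_real_derivative (c t * y t - (\<Sum>k<m. d k t * y (h k t))) + \<alpha>0 * \<eta>) (at t)"
            unfolding g_def by (auto intro!: derivative_eq_intros dy)
          have "- y t + KK * Np \<le> - \<eta>" using big[OF tI] unfolding \<eta>_def by (simp add: algebra_simps)
          then have "aa t * (- y t + KK * Np) \<le> aa t * (- \<eta>)" using aa alpha0 by (intro mult_left_mono) auto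
          also have "aa t * (- \<eta>) \<le> \<alpha>0 * (- \<eta>)" using aa \<eta> by (simp add: mult_right_mono)
          finally have "c t * y t - (\<Sum>k<m. d k t * y (h k t)) + \<alpha>0 * \<eta> \<le> 0" using rb by simp
          then show "\<exists>D. ((\<lambda>x. y x + g x) has_real_derivative D) (at t) \<and> D \<le> 0" using dF by blast
        qed
      qed
    qed
    then have "y (w + 1 / \<alpha>0) \<le> y w - \<eta>" unfolding g_def using alpha0 by (simp add: algebra_simps)
    also have "\<dots> \<le> Np - \<eta>" using ywN by simp
    also have "\<dots> = q * Np" unfolding \<eta>_def q_def by (simp add: field_simps)
    finally show False using big[of "w + 1 / \<alpha>0"] a0 by auto
  qed
  then obtain w1 where w1: "w1 \<in> {w..w + 1 / \<alpha>0}" "y w1 \<le> q * Np" by blast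
  have w1u: "w1 \<le> u" using w1 u by auto
  have w1t: "t1 \<le> w1" using w1 wt1 by auto
  define g where "g x = - (q * Np)" for x :: real
  have ac: "abs_cont_on w1 u (\<lambda>x. y x + g x)"
    by (rule ac_add_lip[OF sol_ac[OF sol w1t w1u] order_refl]) (simp add: g_def)
  have "y u + g u \<le> 0"
  proof (rule barrier[OF w1u ac])
    show "y w1 + g w1 \<le> 0" using w1 unfolding g_def by simp
    show "AE t in lebesgue. t \<in> {w1..u} \<longrightarrow> 0 < y t + g t \<longrightarrow> (\<exists>D. ((\<lambda>x. y x + g x) has_real_derivative D) (at t) \<and> D \<le> 0)"
      using DD
    proof eventually_elim
      case (elim t)
      show ?case
      proof (intro impI)
        assume tI: "t \<in> {w1..u}" and pos: "0 < y t + g t"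
        then have Gt: "G t" and dy: "(y has_real_derivative (c t * y t - (\<Sum>k<m. d k t * y (h k t)))) (at t)"
          and rb: "c t * y t - (\<Sum>k<m. d k t * y (h k t)) \<le> aa t * (- y t + KK * Np)" using elim w1 by auto
        have aa: "aa t > 0" using G_props[OF Gt] by auto
        have dF: "((\<lambda>x. y x + g x) has_real_derivative (c t * y t - (\<Sum>k<m. d k t * y (h k t))) + 0) (at t)"
          unfolding g_def by (auto intro!: derivative_eq_intros dy)
        have "KK * Np \<le> q * Np" using qK Np by (simp add: mult_right_mono)
        then have "- y t + KK * Np \<le> 0" using pos unfolding g_def by simp
        then have "aa t * (- y t + KK * Np) \<le> 0" using aa by (simp add: mult_nonneg_nonpos)
        then show "\<exists>D. ((\<lambda>x. y x + g x) has_real_derivative D) (at t) \<and> D \<le> 0" using dF rb by force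
      qed
    qed
  qed
  then show ?thesis unfolding g_def q_def by simp
qed


lemma DECAY_ALL:
  assumes sol: "sol t1 y" and t1: "t0 \<le> t1" and tm: "\<And>k. k < m \<Longrightarrow> \<tau> k \<le> \<tau>m" "0 \<le> \<tau>m"
    and N: "N \<ge> 0" and reg0: "\<And>x. x \<ge> t1 - \<tau>m \<Longrightarrow> \<bar>y x\<bar> \<le> N"
  shows "x \<ge> t1 + real j * (2 * \<tau>m + 1 / \<alpha>0) - \<tau>m \<Longrightarrow> \<bar>y x\<bar> \<le> ((1 + KK) / 2) ^ j * N"
proof (induction j arbitrary: x)
  case 0
  then show ?case using reg0 by simp
next
  case (Suc j)
  define w where "w = t1 + real j * (2 * \<tau>m + 1 / \<alpha>0) + \<tau>m"
  have P: "0 \<le> 2 * \<tau>m + 1 / \<alpha>0" using tm(2) alpha0 by simp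
  have w: "t1 + \<tau>m \<le> w" unfolding w_def using P by simp
  have reg: "\<bar>y z\<bar> \<le> ((1 + KK) / 2) ^ j * N" if "z \<ge> w - 2 * \<tau>m" for z
    using Suc.IH[of z] that unfolding w_def by (simp add: algebra_simps)
  have reg': "\<bar>- y z\<bar> \<le> ((1 + KK) / 2) ^ j * N" if "z \<ge> w - 2 * \<tau>m" for z
    using reg[OF that] by simp
  have u: "w + 1 / \<alpha>0 \<le> x" using Suc.prems unfolding w_def by (simp add: algebra_simps)
  have 1: "y x \<le> (1 + KK) / 2 * (((1 + KK) / 2) ^ j * N)"
    by (rule STEP[OF sol t1 tm w reg u])
  have 2: "- y x \<le> (1 + KK) / 2 * (((1 + KK) / 2) ^ j * N)"
    by (rule STEP[OF sol_neg[OF sol] t1 tm w reg' u])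
  show ?case using 1 2 by (simp add: abs_le_iff mult.assoc)
qed

lemma STAB:
  assumes sol: "sol t1 y" and t1: "t0 \<le> t1" and tm: "\<And>k. k < m \<Longrightarrow> \<tau> k \<le> \<tau>m" "0 \<le> \<tau>m"
    and P0: "0 \<le> \<Phi>0" "\<And>x. x \<in> {t1 - \<tau>m..t1} \<Longrightarrow> \<bar>y x\<bar> \<le> \<Phi>0" and t: "t1 \<le> t"
  shows "\<bar>y t\<bar> \<le> (2 / (1 - KK) / ((1 + KK) / 2)) *
      exp (- (- ln ((1 + KK) / 2) / (2 * \<tau>m + 1 / \<alpha>0)) * (t - t1)) * \<Phi>0"
proof -
  define q where "q = (1 + KK) / 2"
  define P where "P = 2 * \<tau>m + 1 / \<alpha>0"
  define N where "N = 2 * \<Phi>0 / (1 - KK)"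
  have KK1: "0 < 1 - KK" "1 - KK \<le> 1" using KK_lt KK_nn by auto
  have q: "0 < q" "q < 1" unfolding q_def using KK_lt KK_nn by auto
  have Ppos: "P > 0" unfolding P_def using tm(2) alpha0 by (simp add: add_nonneg_pos)
  have N: "N \<ge> 0" unfolding N_def using P0(1) KK1 by simp
  have PhiN: "\<Phi>0 \<le> N"
  proof -
    have "\<Phi>0 * (1 - KK) \<le> 2 * \<Phi>0" using KK1 P0(1) by (smt (verit) mult_left_le)
    then show ?thesis unfolding N_def using KK1 by (simp add: le_divide_eq)
  qed
  have reg0: "\<bar>y x\<bar> \<le> N" if "x \<ge> t1 - \<tau>m" for x
  proof (cases "x \<le> t1")
    case True then show ?thesis using P0(2)[of x] that PhiN by auto
  next
    case False then show ?thesis using BND1[OF sol t1 tm P0, of x] unfolding N_def by auto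
  qed
  define j where "j = nat \<lfloor>(t - t1) / P\<rfloor>"
  have fl: "real j \<le> (t - t1) / P" "(t - t1) / P < real j + 1"
    unfolding j_def using t Ppos by (auto simp: of_nat_nat)
  have "real j * P \<le> t - t1" using fl(1) Ppos by (simp add: le_divide_eq)
  then have "t \<ge> t1 + real j * P - \<tau>m" using tm(2) by linarith
  then have yb: "\<bar>y t\<bar> \<le> q ^ j * N"
    using DECAY_ALL[OF sol t1 tm N reg0, where x=t and j=j] unfolding q_def P_def by simp
  have "q ^ j = exp (real j * ln q)" using q by (simp add: exp_of_nat_mult)
  also have "\<dots> \<le> exp (((t - t1) / P - 1) * ln q)"
  proof -
    have "ln q < 0" using q by simp
    then have "real j * ln q \<le> ((t - t1) / P - 1) * ln q" using fl(2) by (intro mult_right_mono_neg) auto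
    then show ?thesis by simp
  qed
  also have "\<dots> = exp (- (- ln q / P) * (t - t1)) / q"
    using q Ppos by (simp add: exp_diff algebra_simps)
  finally have "q ^ j \<le> exp (- (- ln q / P) * (t - t1)) / q" .
  then have "\<bar>y t\<bar> \<le> exp (- (- ln q / P) * (t - t1)) / q * N" using yb N by (meson mult_right_mono order_trans)
  also have "\<dots> = (2 / (1 - KK) / q) * exp (- (- ln q / P) * (t - t1)) * \<Phi>0"
    unfolding N_def by (simp add: field_simps)
  finally show ?thesis unfolding q_def P_def .
qed

end



theorem lemma3p1:
  fixes t0 \<alpha>0 :: real and m :: nat
    and c :: "real \<Rightarrow> real" and d h :: "nat \<Rightarrow> real \<Rightarrow> real"
    and \<delta> \<tau> :: "nat \<Rightarrow> real"
  assumes t0: "t0 \<ge> 0" and m: "m \<ge> 1"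
    and c_meas: "set_borel_measurable lebesgue {0..} c"
    and c_bdd: "ess_bounded_on {0..} c"
    and d_meas: "\<And>k. k < m \<Longrightarrow> set_borel_measurable lebesgue {0..} (d k)"
    and d_bdd: "\<And>k. k < m \<Longrightarrow> ess_bounded_on {0..} (d k)"
    and h_meas: "\<And>k. k < m \<Longrightarrow> set_borel_measurable lebesgue {0..} (h k)"
    and delays: "\<And>k. k < m \<Longrightarrow> 0 \<le> \<delta> k \<and> \<delta> k \<le> \<tau> k"
    and h_delay: "\<And>k t. k < m \<Longrightarrow> t \<ge> t0 \<Longrightarrow> \<delta> k \<le> t - h k t \<and> t - h k t \<le> \<tau> k"
    and alpha0: "\<alpha>0 > 0"
    and dc: "AE t in lebesgue. t \<ge> t0 \<longrightarrow> (\<Sum>k<m. d k t) - c t \<ge> \<alpha>0"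
    and K0: "(ess_norm {t0..} c + (\<Sum>k<m. ess_norm {t0..} (d k)))
              * (\<Sum>k<m. \<tau> k * ess_norm {t0..} (\<lambda>t. d k t / ((\<Sum>j<m. d j t) - c t))) < 1"
  shows "unif_exp_stable c d h m t0 (Max (\<tau> ` {..<m}))
    \<and> (\<forall>Y. is_fundamental_function c d h m t0 Y \<longrightarrow>
         (\<forall>t s. t0 \<le> s \<and> s \<le> t \<longrightarrow>
            \<bar>Y t s\<bar> \<le> 1 / (1 - (ess_norm {t0..} c + (\<Sum>k<m. ess_norm {t0..} (d k)))
              * (\<Sum>k<m. \<tau> k * ess_norm {t0..} (\<lambda>t. d k t / ((\<Sum>j<m. d j t) - c t))))))"
proof -
  define C where "C = ess_norm {t0..} c"
  define Dk where "Dk k = ess_norm {t0..} (d k)" for k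
  define B where "B k = ess_norm {t0..} (\<lambda>t. d k t / ((\<Sum>j<m. d j t) - c t))" for k
  have cm: "c \<in> borel_measurable (restrict_space lebesgue {t0..})" using meas_restr[OF c_meas t0] .
  have dm: "d k \<in> borel_measurable (restrict_space lebesgue {t0..})" if "k < m" for k
    using meas_restr[OF d_meas[OF that] t0] .
  have cAE: "AE t in lebesgue. t \<ge> t0 \<longrightarrow> \<bar>c t\<bar> \<le> C"
    unfolding C_def by (rule ess_AE[OF ess_fin_mono[OF c_meas c_bdd t0]])
  have dAE: "AE t in lebesgue. t \<ge> t0 \<longrightarrow> \<bar>d k t\<bar> \<le> Dk k" if k: "k < m" for k
    unfolding Dk_def by (rule ess_AE[OF ess_fin_mono[OF d_meas[OF k] d_bdd[OF k] t0]])
  have qm: "(\<lambda>t. d k t / ((\<Sum>j<m. d j t) - c t)) \<in> borel_measurable (restrict_space lebesgue {t0..})"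
    if k: "k < m" for k
    by (intro borel_measurable_divide borel_measurable_diff borel_measurable_sum dm cm k) auto
  have qAE0: "AE t in lebesgue. t \<ge> t0 \<longrightarrow> \<bar>d k t / ((\<Sum>j<m. d j t) - c t)\<bar> \<le> Dk k / \<alpha>0"
    if k: "k < m" for k
    using dAE[OF k] dc
  proof eventually_elim
    case (elim t)
    show ?case
    proof
      assume t: "t0 \<le> t"
      define a where "a = (\<Sum>j<m. d j t) - c t"
      have a: "a \<ge> \<alpha>0" "a > 0" using elim t alpha0 unfolding a_def by auto
      have dk: "\<bar>d k t\<bar> \<le> Dk k" using elim t by auto
      have "\<bar>d k t / a\<bar> = \<bar>d k t\<bar> / a" using a by simp
      also have "\<dots> \<le> Dk k / a" using dk a by (simp add: divide_right_mono)
      also have "\<dots> \<le> Dk k / \<alpha>0" using a alpha0 dk by (intro divide_left_mono) auto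
      finally show "\<bar>d k t / ((\<Sum>j<m. d j t) - c t)\<bar> \<le> Dk k / \<alpha>0" unfolding a_def .
    qed
  qed
  have qAE: "AE t in lebesgue. t \<ge> t0 \<longrightarrow> \<bar>d k t / ((\<Sum>j<m. d j t) - c t)\<bar> \<le> B k"
    if k: "k < m" for k
    unfolding B_def by (rule ess_AE[OF ess_fin_from_AE[OF qm[OF k] qAE0[OF k]]])
  have allAE: "AE t in lebesgue. \<forall>k\<in>{..<m}. (t \<ge> t0 \<longrightarrow> \<bar>d k t\<bar> \<le> Dk k) \<and>
      (t \<ge> t0 \<longrightarrow> \<bar>d k t / ((\<Sum>j<m. d j t) - c t)\<bar> \<le> B k)"
    by (rule AE_finite_allI) (use dAE qAE in \<open>auto intro: AE_conjI\<close>)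
  have good: "AE t in lebesgue. t \<ge> t0 \<longrightarrow> ((\<Sum>k<m. d k t) - c t \<ge> \<alpha>0 \<and> \<bar>c t\<bar> \<le> C \<and>
        (\<forall>k<m. \<bar>d k t\<bar> \<le> Dk k \<and> \<bar>d k t\<bar> \<le> ((\<Sum>j<m. d j t) - c t) * B k))"
    using dc cAE allAE
  proof eventually_elim
    case (elim t)
    show ?case
    proof
      assume t: "t0 \<le> t"
      define a where "a = (\<Sum>j<m. d j t) - c t"
      have a: "a \<ge> \<alpha>0" "a > 0" using elim t alpha0 unfolding a_def by auto
      have "\<bar>d k t\<bar> \<le> a * B k" if k: "k < m" for k
      proof -
        have "\<bar>d k t / a\<bar> \<le> B k" using elim t k unfolding a_def by auto
        then have "\<bar>d k t\<bar> / a \<le> B k" using a by simp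
        then show ?thesis using a by (simp add: divide_le_eq mult.commute)
      qed
      then show "(\<Sum>k<m. d k t) - c t \<ge> \<alpha>0 \<and> \<bar>c t\<bar> \<le> C \<and>
        (\<forall>k<m. \<bar>d k t\<bar> \<le> Dk k \<and> \<bar>d k t\<bar> \<le> ((\<Sum>j<m. d j t) - c t) * B k)"
        using elim t a unfolding a_def by auto
    qed
  qed
  have Bnn: "B k \<ge> 0" if k: "k < m" for k
    using AE_exists_point[OF qAE[OF k]] by (meson abs_ge_zero order_trans)
  interpret dde t0 m c d h \<tau> \<alpha>0 C Dk B
  proof
    show "\<And>k. k < m \<Longrightarrow> \<tau> k \<ge> 0" using delays by force
    show "\<And>k t. k < m \<Longrightarrow> t \<ge> t0 \<Longrightarrow> t - \<tau> k \<le> h k t \<and> h k t \<le> t"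
      using delays h_delay by force
    show "\<alpha>0 > 0" by (rule alpha0)
    show "\<And>k. k < m \<Longrightarrow> B k \<ge> 0" by (rule Bnn)
    show "AE t in lebesgue. t \<ge> t0 \<longrightarrow> ((\<Sum>k<m. d k t) - c t \<ge> \<alpha>0 \<and> \<bar>c t\<bar> \<le> C \<and>
        (\<forall>k<m. \<bar>d k t\<bar> \<le> Dk k \<and> \<bar>d k t\<bar> \<le> ((\<Sum>j<m. d j t) - c t) * B k))" by (rule good)
    show "(C + (\<Sum>k<m. Dk k)) * (\<Sum>k<m. \<tau> k * B k) < 1" using K0 unfolding C_def Dk_def B_def .
  qed
  have KKeq: "KK = (ess_norm {t0..} c + (\<Sum>k<m. ess_norm {t0..} (d k)))
              * (\<Sum>k<m. \<tau> k * ess_norm {t0..} (\<lambda>t. d k t / ((\<Sum>j<m. d j t) - c t)))"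
    unfolding KK_def L_def by (simp add: C_def Dk_def B_def)
  have part2: "\<forall>Y. is_fundamental_function c d h m t0 Y \<longrightarrow>
         (\<forall>t s. t0 \<le> s \<and> s \<le> t \<longrightarrow> \<bar>Y t s\<bar> \<le> 1 / (1 - KK))"
  proof (intro allI impI)
    fix Y t s assume Y: "is_fundamental_function c d h m t0 Y" and ts: "t0 \<le> s \<and> s \<le> t"
    then have iss: "is_solution c d h m s (\<lambda>t. if t = s then 1 else 0) (\<lambda>t. Y t s)"
      unfolding is_fundamental_function_def by auto
    then have sol: "sol s (\<lambda>t. Y t s)" unfolding is_solution_def sol_def loc_abs_cont_from_def by blast
    have ys: "Y s s = 1" and y0: "\<And>x. x < s \<Longrightarrow> Y x s = 0" using iss unfolding is_solution_def by auto
    show "\<bar>Y t s\<bar> \<le> 1 / (1 - KK)"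
      using FUND[OF sol _ _ _, of t] ts ys y0 by auto
  qed
  define \<tau>m where "\<tau>m = Max (\<tau> ` {..<m})"
  have tm: "\<tau> k \<le> \<tau>m" if "k < m" for k unfolding \<tau>m_def using that by (intro Max_ge) auto
  have tm0: "0 \<le> \<tau>m" using tm[of 0] delays[of 0] m by force
  define q where "q = (1 + KK) / 2"
  have q: "0 < q" "q < 1" unfolding q_def using KK_lt KK_nn by auto
  define M where "M = 2 / (1 - KK) / q"
  define \<gamma> where "\<gamma> = - ln q / (2 * \<tau>m + 1 / \<alpha>0)"
  have Mpos: "M > 0" unfolding M_def using q KK_lt by simp
  have gpos: "\<gamma> > 0"
  proof -
    have "- ln q > 0" using q by simp
    moreover have "2 * \<tau>m + 1 / \<alpha>0 > 0" using tm0 alpha0 by (simp add: add_nonneg_pos)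
    ultimately show ?thesis unfolding \<gamma>_def by (rule divide_pos_pos)
  qed
  have part1: "unif_exp_stable c d h m t0 \<tau>m"
    unfolding unif_exp_stable_def
  proof (rule exI[of _ M], rule conjI[OF Mpos], rule exI[of _ \<gamma>], rule conjI[OF gpos], intro allI impI)
    fix t1 \<phi> y t
    assume t1: "t0 \<le> t1" and H: "bounded (\<phi> ` {t1 - \<tau>m..t1}) \<and> set_borel_measurable borel {t1 - \<tau>m..t1} \<phi> \<and>
        is_solution c d h m t1 \<phi> y" and t: "t1 \<le> t"
    have sol: "sol t1 y" using H unfolding is_solution_def sol_def loc_abs_cont_from_def by blast
    have yphi: "\<And>x. x \<le> t1 \<Longrightarrow> y x = \<phi> x" using H unfolding is_solution_def by auto
    have "\<exists>a. \<forall>x\<in>\<phi> ` {t1 - \<tau>m..t1}. \<bar>x\<bar> \<le> a" using H bounded_real by blast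
    then obtain Bd where "\<forall>x\<in>\<phi> ` {t1 - \<tau>m..t1}. \<bar>x\<bar> \<le> Bd" by blast
    then have Bd: "\<And>x. x \<in> {t1 - \<tau>m..t1} \<Longrightarrow> \<bar>\<phi> x\<bar> \<le> Bd" by blast
    have bdd: "bdd_above ((\<lambda>s. \<bar>\<phi> s\<bar>) ` {t1 - \<tau>m..t1})" using Bd by (intro bdd_aboveI2) auto
    define \<Phi>0 where "\<Phi>0 = (SUP s\<in>{t1 - \<tau>m..t1}. \<bar>\<phi> s\<bar>)"
    have P0: "\<bar>y x\<bar> \<le> \<Phi>0" if "x \<in> {t1 - \<tau>m..t1}" for x
      unfolding \<Phi>0_def using cSUP_upper[OF that bdd] yphi[of x] that by auto
    have t1I: "t1 \<in> {t1 - \<tau>m..t1}" using tm0 by auto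
    have P00: "0 \<le> \<Phi>0" using P0[OF t1I] by linarith
    have "\<bar>y t\<bar> \<le> (2 / (1 - KK) / ((1 + KK) / 2)) *
      exp (- (- ln ((1 + KK) / 2) / (2 * \<tau>m + 1 / \<alpha>0)) * (t - t1)) * \<Phi>0"
      by (rule STAB[OF sol t1 tm tm0 P00 P0 t])
    then show "\<bar>y t\<bar> \<le> M * exp (- \<gamma> * (t - t1)) * (SUP s\<in>{t1 - \<tau>m..t1}. \<bar>\<phi> s\<bar>)"
      unfolding M_def \<gamma>_def q_def \<Phi>0_def by simp
  qed
  show ?thesis using part1 part2 unfolding \<tau>m_def KKeq by blast
qed


end
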